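(* Let $V$ be an $n$-dimensional real vector space and $\mu\in(V^* )^{\wedge p}$ a nonzero exterior $p$-form of rank $r$, with kernel $Z$ and divisibility space $D$, so that $\dim Z=n-r$; set $s=n-\dim D$ (one has $s\le r$). Then: (a) $s\neq p-1$ and $s\le p$, with $s=p$ if and only if $\mu$ is decomposable; (b) for any basis $\xi^1,\dots,\xi^n$ of $V^*$ such that $\xi^1,\dots,\xi^s$ is a basis of the polar space $D'$ of $D$, one has $\mu=\xi^1\wedge\dots\wedge\xi^s\wedge\zeta$, where the $(p-s)$-form $\zeta$ is indivisible and is a linear combination of $(p-s)$-fold exterior products of $1$-forms from $\{\xi^{s+1},\dots,\xi^n\}$; (c) if $\mu=\xi^1\wedge\dots\wedge\xi^s\wedge\zeta$ for some basis $\xi^1,\dots,\xi^s$ of $D'$ and some exterior $(p-s)$-form $\zeta$, then the restriction of any such $\zeta$ to $D$ is uniquely determined by $\mu$ up to a nonzero scalar factor; (d) this restriction of $\zeta$ to $D$ is indivisible in $D$.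
   Context: The rank of $\mu$ is the minimum dimension of a vector space $W$ such that $\mu$ is the pullback of an exterior $p$-form on $W$ under some linear map $V\to W$. The kernel of $\mu$ is $Z=\{v\in V:\mu(v,\cdot,\dots,\cdot)=0\}$. The divisibility space $D$ is the common kernel of all $\xi\in V^*$ with $\xi\wedge\mu=0$; $D'=\{\xi\in V^*:\xi\wedge\mu=0\}$ is its polar space. A $p$-form is decomposable if it is an exterior product of $p$ $1$-forms. A form is indivisible (in a space) if its divisibility space is the whole space, i.e. $\xi\wedge\mu\neq0$ for all nonzero $1$-forms $\xi$; a nonzero $0$-form is indivisible. *)

theory Defs
  imports "HOL-Analysis.Analysis"
begin

text \<open>Exterior p-forms on a finite-dimensional real vector space 'v (euclidean_space, only its
  real vector space structure is used) are represented as alternating multilinear maps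
  \<open>(nat \<Rightarrow> 'v) \<Rightarrow> real\<close> depending only on the arguments with index < p.
  1-forms (elements of V*) are linear maps \<open>'v \<Rightarrow> real\<close>.\<close>

definition is_form :: "nat \<Rightarrow> ((nat \<Rightarrow> 'v::real_vector) \<Rightarrow> real) \<Rightarrow> bool" where
  "is_form p \<mu> \<longleftrightarrow>
     (\<forall>v w. (\<forall>i<p. v i = w i) \<longrightarrow> \<mu> v = \<mu> w) \<and>
     (\<forall>i<p. \<forall>v. linear (\<lambda>x. \<mu> (v(i := x)))) \<and>
     (\<forall>v i j. i < p \<and> j < p \<and> i \<noteq> j \<and> v i = v j \<longrightarrow> \<mu> v = 0)"

text \<open>Exterior product (normalisation 1/(p! q!), so that products of 1-forms are determinants).\<close>
definition wedge :: "nat \<Rightarrow> nat \<Rightarrow> ((nat \<Rightarrow> 'v) \<Rightarrow> real) \<Rightarrow> ((nat \<Rightarrow> 'v) \<Rightarrow> real)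
    \<Rightarrow> (nat \<Rightarrow> 'v) \<Rightarrow> real" where
  "wedge p q \<alpha> \<beta> v =
     (\<Sum>\<sigma> | \<sigma> permutes {..<p+q}.
        of_int (sign \<sigma>) * \<alpha> (v \<circ> \<sigma>) * \<beta> (\<lambda>i. v (\<sigma> (p + i)))) / (fact p * fact q)"

definition one_form :: "('v \<Rightarrow> real) \<Rightarrow> (nat \<Rightarrow> 'v) \<Rightarrow> real" where
  "one_form \<xi> v = \<xi> (v 0)"

definition wedge_list :: "nat \<Rightarrow> (nat \<Rightarrow> 'v \<Rightarrow> real) \<Rightarrow> (nat \<Rightarrow> 'v) \<Rightarrow> real" where
  "wedge_list k \<xi> v = (\<Sum>\<sigma> | \<sigma> permutes {..<k}. of_int (sign \<sigma>) * (\<Prod>i<k. \<xi> i (v (\<sigma> i))))"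

text \<open>Decomposable: an exterior product of p 1-forms (a scalar factor is allowed, which
  only matters for p = 0).\<close>
definition decomposable :: "nat \<Rightarrow> ((nat \<Rightarrow> 'v::real_vector) \<Rightarrow> real) \<Rightarrow> bool" where
  "decomposable p \<mu> \<longleftrightarrow>
     (\<exists>c \<xi>. (\<forall>i<p. linear (\<xi> i)) \<and> \<mu> = (\<lambda>v. c * wedge_list p \<xi> v))"

text \<open>Kernel: vectors whose contraction with \<mu> vanishes (for p = 0 the contraction is 0).\<close>
definition form_kernel :: "nat \<Rightarrow> ((nat \<Rightarrow> 'v::real_vector) \<Rightarrow> real) \<Rightarrow> 'v set" where
  "form_kernel p \<mu> = {x. p = 0 \<or> (\<forall>w. \<mu> (w(0 := x)) = 0)}"

text \<open>Rank: minimal dimension of W such that \<mu> is a pullback of a p-form on W under a linear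
  map V \<rightarrow> W.  Since the minimal such W has dimension at most dim V, it suffices to let W range
  over subspaces of V.  A p-form on W is represented by (the restriction of) a p-form on V.\<close>
definition form_rank :: "nat \<Rightarrow> ((nat \<Rightarrow> 'v::euclidean_space) \<Rightarrow> real) \<Rightarrow> nat" where
  "form_rank p \<mu> = (LEAST d. \<exists>(W::'v set) (f::'v \<Rightarrow> 'v) \<nu>. subspace W \<and> dim W = d \<and> linear f \<and> range f \<subseteq> W \<and>
       is_form p \<nu> \<and> (\<forall>v. \<mu> v = \<nu> (f \<circ> v)))"

text \<open>Divisibility space of a q-form \<mu> restricted to a subspace U: common kernel (in U) of all
  1-forms \<eta> on U with \<eta> \<and> \<mu> = 0 on U.  (1-forms on U are restrictions of 1-forms on V.)\<close>
definition div_space :: "'v::real_vector set \<Rightarrow> nat \<Rightarrow> ((nat \<Rightarrow> 'v) \<Rightarrow> real) \<Rightarrow> 'v set" where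
  "div_space U q \<mu> = {x \<in> U. \<forall>\<eta>. linear \<eta> \<and>
       (\<forall>v. (\<forall>i<q+1. v i \<in> U) \<longrightarrow> wedge 1 q (one_form \<eta>) \<mu> v = 0) \<longrightarrow> \<eta> x = 0}"

definition indivisible_in :: "'v::real_vector set \<Rightarrow> nat \<Rightarrow> ((nat \<Rightarrow> 'v) \<Rightarrow> real) \<Rightarrow> bool" where
  "indivisible_in U q \<mu> \<longleftrightarrow> div_space U q \<mu> = U"

definition div_polar :: "nat \<Rightarrow> ((nat \<Rightarrow> 'v::real_vector) \<Rightarrow> real) \<Rightarrow> ('v \<Rightarrow> real) set" where
  "div_polar p \<mu> = {\<xi>. linear \<xi> \<and> wedge 1 p (one_form \<xi>) \<mu> = (\<lambda>v. 0)}"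

definition fun_lin_indep :: "nat \<Rightarrow> (nat \<Rightarrow> 'v \<Rightarrow> real) \<Rightarrow> bool" where
  "fun_lin_indep k \<xi> \<longleftrightarrow> (\<forall>c. (\<forall>x. (\<Sum>i<k. c i * \<xi> i x) = 0) \<longrightarrow> (\<forall>i<k. c i = 0))"

definition fun_basis_of :: "nat \<Rightarrow> (nat \<Rightarrow> 'v::real_vector \<Rightarrow> real) \<Rightarrow> ('v \<Rightarrow> real) set \<Rightarrow> bool" where
  "fun_basis_of k \<xi> S \<longleftrightarrow> (\<forall>i<k. \<xi> i \<in> S) \<and> fun_lin_indep k \<xi> \<and>
     (\<forall>\<eta>\<in>S. \<exists>c. \<forall>x. \<eta> x = (\<Sum>i<k. c i * \<xi> i x))"

end

theory Submission
  imports Defs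
begin

lemma form_dep: "is_form p \<mu> \<Longrightarrow> (\<And>i. i<p \<Longrightarrow> v i = w i) \<Longrightarrow> \<mu> v = \<mu> w"
  unfolding is_form_def by blast

lemma form_lin: "is_form p \<mu> \<Longrightarrow> i < p \<Longrightarrow> linear (\<lambda>x. \<mu> (v(i := x)))"
  unfolding is_form_def by blast

lemma form_alt: "is_form p \<mu> \<Longrightarrow> i<p \<Longrightarrow> j<p \<Longrightarrow> i\<noteq>j \<Longrightarrow> v i = v j \<Longrightarrow> \<mu> v = 0"
  unfolding is_form_def by blast

lemma form_add: "is_form p \<mu> \<Longrightarrow> i<p \<Longrightarrow> \<mu> (v(i := x + y)) = \<mu> (v(i:=x)) + \<mu> (v(i:=y))"
  using form_lin[of p \<mu> i v] by (simp add: linear_iff)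

lemma form_scale: "is_form p \<mu> \<Longrightarrow> i<p \<Longrightarrow> \<mu> (v(i := c *\<^sub>R x)) = c * \<mu> (v(i:=x))"
  using form_lin[of p \<mu> i v] by (simp add: linear_iff)

lemma form_swap:
  assumes f: "is_form p \<mu>" and ij: "i<p" "j<p" "i\<noteq>j"
  shows "\<mu> (v \<circ> Transposition.transpose i j) = - \<mu> v"
proof -
  define x where "x = v i"
  define y where "y = v j"
  have tw: "\<And>a b. v(i:=a, j:=b) = (v(j:=b))(i:=a)" using ij by (auto simp: fun_eq_iff)
  have "0 = \<mu> ((v(j:=x+y))(i:=x+y))"
    by (rule form_alt[OF f ij(1,2,3), symmetric]) (use ij in auto)
  also have "\<dots> = \<mu> ((v(j:=x+y))(i:=x)) + \<mu> ((v(j:=x+y))(i:=y))"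
    by (rule form_add[OF f ij(1)])
  also have "\<mu> ((v(j:=x+y))(i:=x)) = \<mu> ((v(i:=x))(j:=x+y))" using tw by simp
  also have "\<dots> = \<mu> ((v(i:=x))(j:=x)) + \<mu> ((v(i:=x))(j:=y))"
    by (rule form_add[OF f ij(2)])
  also have "\<mu> ((v(i:=x))(j:=x)) = 0"
    by (rule form_alt[OF f ij(1,2,3)]) (use ij in auto)
  also have "(v(i:=x))(j:=y) = v" by (auto simp: x_def y_def fun_eq_iff)
  also have "\<mu> ((v(j:=x+y))(i:=y)) = \<mu> ((v(i:=y))(j:=x+y))" using tw by simp
  also have "\<dots> = \<mu> ((v(i:=y))(j:=x)) + \<mu> ((v(i:=y))(j:=y))"
    by (rule form_add[OF f ij(2)])
  also have "\<mu> ((v(i:=y))(j:=y)) = 0"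
    by (rule form_alt[OF f ij(1,2,3)]) (use ij in auto)
  also have "(v(i:=y))(j:=x) = v \<circ> Transposition.transpose i j"
    using ij by (auto simp: x_def y_def fun_eq_iff Transposition.transpose_def)
  finally have "0 = \<mu> v + \<mu> (v \<circ> Transposition.transpose i j)" by (simp add: o_def)
  then show ?thesis by linarith
qed

lemma alt_perm:
  assumes fin: "finite A" and sig: "\<sigma> permutes A"
    and sw: "\<And>u a b. a \<in> A \<Longrightarrow> b \<in> A \<Longrightarrow> a \<noteq> b \<Longrightarrow> g (u \<circ> Transposition.transpose a b) = - g u"
  shows "g (u \<circ> \<sigma>) = of_int (sign \<sigma>) * g u"
proof -
  have "\<forall>u. g (u \<circ> \<sigma>) = of_int (sign \<sigma>) * g u"
    using sig fin
  proof (induction rule: permutes_induct)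
    case id
    then show ?case by (simp add: sign_id)
  next
    case (swap a b p)
    from swap have ab: "a \<in> A" "b \<in> A" "a \<noteq> b" and pA: "p permutes A"
      and IH: "\<forall>u. g (u \<circ> p) = of_int (sign p) * g u" by (auto simp: o_def)
    have pp: "permutation p" using permutes_imp_permutation[OF fin pA] .
    have "sign (Transposition.transpose a b \<circ> p) = - sign p"
      using ab pp by (simp add: sign_compose sign_swap_id permutation_swap_id)
    moreover have "g (u \<circ> (Transposition.transpose a b \<circ> p)) = - (of_int (sign p) * g u)" for u
    proof -
      have "g (u \<circ> (Transposition.transpose a b \<circ> p)) = g ((u \<circ> Transposition.transpose a b) \<circ> p)" by (simp add: comp_assoc)
      also have "\<dots> = of_int (sign p) * g (u \<circ> Transposition.transpose a b)" using IH by blast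
      also have "\<dots> = - (of_int (sign p) * g u)" using sw[OF ab] by simp
      finally show ?thesis .
    qed
    ultimately have "\<forall>u. g (u \<circ> (Transposition.transpose a b \<circ> p)) = of_int (sign (Transposition.transpose a b \<circ> p)) * g u" by simp
    then show ?case by (simp add: o_def)
  qed
  then show ?thesis by blast
qed

lemma form_perm:
  assumes f: "is_form p \<mu>" and sig: "\<sigma> permutes {..<p}"
  shows "\<mu> (v \<circ> \<sigma>) = of_int (sign \<sigma>) * \<mu> v"
proof (rule alt_perm[OF _ sig])
  fix u a b assume "a \<in> {..<p}" "b \<in> {..<p}" "a \<noteq> b"
  then show "\<mu> (u \<circ> Transposition.transpose a b) = - \<mu> u" using form_swap[OF f] by simp
qed simp

lemma lin_cmul: "linear (f :: 'a::real_vector \<Rightarrow> real) \<Longrightarrow> linear (\<lambda>x. c * f x)"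
  by (simp add: linear_iff algebra_simps)

lemma lin_mulc: "linear (f :: 'a::real_vector \<Rightarrow> real) \<Longrightarrow> linear (\<lambda>x. f x * c)"
  by (simp add: linear_iff algebra_simps)

lemma lin_const: "linear (\<lambda>x::'a::real_vector. (0::real))"
  by (simp add: linear_iff)

lemma perm_lt: "\<sigma> permutes {..<n} \<Longrightarrow> k < n \<Longrightarrow> \<sigma> k < n"
  using permutes_in_image[of \<sigma> "{..<n}" k] by simp

lemma wedge_list_perm:
  assumes tau: "\<tau> permutes {..<s}"
  shows "wedge_list s \<xi> (v \<circ> \<tau>) = of_int (sign \<tau>) * wedge_list s \<xi> v"
proof -
  let ?P = "{\<sigma>. \<sigma> permutes {..<s}}"
  let ?f = "\<lambda>\<sigma>. of_int (sign \<sigma>) * (\<Prod>i<s. \<xi> i ((v \<circ> \<tau>) (\<sigma> i)))"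
  have pt: "permutation \<tau>" using permutes_imp_permutation[OF _ tau] by simp
  have pit: "inv \<tau> permutes {..<s}" using permutes_inv[OF tau] .
  have "wedge_list s \<xi> (v \<circ> \<tau>) = sum ?f ?P" unfolding wedge_list_def by simp
  also have "\<dots> = (\<Sum>\<sigma>\<in>?P. ?f (inv \<tau> \<circ> \<sigma>))"
    by (rule setum_permutations_compose_left[OF pit])
  also have "\<dots> = (\<Sum>\<sigma>\<in>?P. of_int (sign \<tau>) * (of_int (sign \<sigma>) * (\<Prod>i<s. \<xi> i (v (\<sigma> i)))))"
  proof (rule sum.cong[OF refl])
    fix \<sigma> assume "\<sigma> \<in> ?P"
    then have ps: "permutation \<sigma>" using permutes_imp_permutation[of "{..<s}" \<sigma>] by simp
    have "sign (inv \<tau> \<circ> \<sigma>) = sign \<tau> * sign \<sigma>"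
      using pt ps by (simp add: sign_compose sign_inverse permutation_inverse)
    moreover have "(v \<circ> \<tau>) ((inv \<tau> \<circ> \<sigma>) i) = v (\<sigma> i)" for i
      using permutes_inverses(1)[OF tau] by simp
    ultimately show "?f (inv \<tau> \<circ> \<sigma>) = of_int (sign \<tau>) * (of_int (sign \<sigma>) * (\<Prod>i<s. \<xi> i (v (\<sigma> i))))"
      by simp
  qed
  also have "\<dots> = of_int (sign \<tau>) * wedge_list s \<xi> v"
    unfolding wedge_list_def by (simp add: sum_distrib_left)
  finally show ?thesis .
qed

lemma wedge_list_form:
  assumes lin: "\<And>k. k < s \<Longrightarrow> linear (\<xi> k)"
  shows "is_form s (wedge_list s \<xi>)"
  unfolding is_form_def
proof (intro conjI allI impI)
  fix v w :: "nat \<Rightarrow> 'a" assume vw: "\<forall>i<s. v i = w i"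
  show "wedge_list s \<xi> v = wedge_list s \<xi> w"
    unfolding wedge_list_def
    by (intro sum.cong refl arg_cong2[where f="(*)"] prod.cong) (auto simp: vw perm_lt)
next
  fix i v assume i: "i < s"
  show "linear (\<lambda>x. wedge_list s \<xi> (v(i := x)))"
    unfolding wedge_list_def
  proof (rule linear_compose_sum, rule ballI)
    fix \<sigma> assume "\<sigma> \<in> {\<sigma>. \<sigma> permutes {..<s}}"
    then have sig: "\<sigma> permutes {..<s}" by simp
    define k0 where "k0 = inv \<sigma> i"
    have k0: "k0 < s" "\<sigma> k0 = i"
      using i permutes_inverses(1)[OF sig] perm_lt[OF permutes_inv[OF sig]] by (auto simp: k0_def)
    have other: "k < s \<Longrightarrow> k \<noteq> k0 \<Longrightarrow> \<sigma> k \<noteq> i" for k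
      using k0 permutes_inj[OF sig] by (auto dest: injD)
    have eq: "(\<Prod>k<s. \<xi> k ((v(i := x)) (\<sigma> k))) =
              \<xi> k0 x * (\<Prod>k\<in>{..<s} - {k0}. \<xi> k (v (\<sigma> k)))" for x
    proof -
      have "(\<Prod>k<s. \<xi> k ((v(i := x)) (\<sigma> k))) =
            \<xi> k0 ((v(i := x)) (\<sigma> k0)) * (\<Prod>k\<in>{..<s} - {k0}. \<xi> k ((v(i := x)) (\<sigma> k)))"
        using k0 by (subst prod.remove[of _ k0]) auto
      also have "\<dots> = \<xi> k0 x * (\<Prod>k\<in>{..<s} - {k0}. \<xi> k (v (\<sigma> k)))"
        using k0 other by (intro arg_cong2[where f="(*)"] prod.cong) auto
      finally show ?thesis .
    qed
    show "linear (\<lambda>x. of_int (sign \<sigma>) * (\<Prod>k<s. \<xi> k ((v(i := x)) (\<sigma> k))))"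
      unfolding eq using lin[OF k0(1)]
      by (intro lin_cmul lin_mulc)
  qed
next
  fix v :: "nat \<Rightarrow> 'a" and i j
  assume h: "i < s \<and> j < s \<and> i \<noteq> j \<and> v i = v j"
  have "v \<circ> Transposition.transpose i j = v"
    using h by (auto simp: fun_eq_iff Transposition.transpose_def)
  moreover have "wedge_list s \<xi> (v \<circ> Transposition.transpose i j) = - wedge_list s \<xi> v"
    using wedge_list_perm[of "Transposition.transpose i j" s \<xi> v] h
    by (simp add: permutes_swap_id sign_swap_id)
  ultimately show "wedge_list s \<xi> v = 0" by simp
qed

lemma wedge_list_zero_row:
  assumes k: "k < s" and z: "\<And>i. i < s \<Longrightarrow> \<xi> k (v i) = 0"
  shows "wedge_list s \<xi> v = 0"
  unfolding wedge_list_def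
proof (rule sum.neutral, rule ballI)
  fix \<sigma> assume "\<sigma> \<in> {\<sigma>. \<sigma> permutes {..<s}}"
  then have "\<xi> k (v (\<sigma> k)) = 0" using z perm_lt k by auto
  then have "(\<Prod>i<s. \<xi> i (v (\<sigma> i))) = 0" using k by (intro prod_zero) auto
  then show "of_int (sign \<sigma>) * (\<Prod>i<s. \<xi> i (v (\<sigma> i))) = 0" by simp
qed

lemma wedge_list_zero_col:
  assumes i: "i < s" and z: "\<And>k. k < s \<Longrightarrow> \<xi> k (v i) = 0"
  shows "wedge_list s \<xi> v = 0"
  unfolding wedge_list_def
proof (rule sum.neutral, rule ballI)
  fix \<sigma> assume "\<sigma> \<in> {\<sigma>. \<sigma> permutes {..<s}}"
  then have sig: "\<sigma> permutes {..<s}" by simp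
  have k0: "inv \<sigma> i < s" "\<sigma> (inv \<sigma> i) = i"
    using i permutes_inverses(1)[OF sig] perm_lt[OF permutes_inv[OF sig]] by auto
  then have "\<xi> (inv \<sigma> i) (v (\<sigma> (inv \<sigma> i))) = 0" using z by simp
  then have "\<exists>a\<in>{..<s}. \<xi> a (v (\<sigma> a)) = 0" using k0 by blast
  then have "(\<Prod>k<s. \<xi> k (v (\<sigma> k))) = 0" by (intro prod_zero) auto
  then show "of_int (sign \<sigma>) * (\<Prod>k<s. \<xi> k (v (\<sigma> k))) = 0" by simp
qed

lemma wedge_list_diag:
  assumes z: "\<And>k i. k < s \<Longrightarrow> i < s \<Longrightarrow> i \<noteq> k \<Longrightarrow> \<xi> k (v i) = 0"
  shows "wedge_list s \<xi> v = (\<Prod>k<s. \<xi> k (v k))"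
proof -
  let ?P = "{\<sigma>. \<sigma> permutes {..<s}}"
  let ?f = "\<lambda>\<sigma>. of_int (sign \<sigma>) * (\<Prod>k<s. \<xi> k (v (\<sigma> k)))"
  have fin: "finite ?P" by (rule finite_permutations) simp
  have "wedge_list s \<xi> v = sum ?f ?P" unfolding wedge_list_def by simp
  also have "\<dots> = ?f id + sum ?f (?P - {id})"
    using fin by (subst sum.remove[of _ id]) auto
  also have "sum ?f (?P - {id}) = 0"
  proof (rule sum.neutral, rule ballI)
    fix \<sigma> assume "\<sigma> \<in> ?P - {id}"
    then have sig: "\<sigma> permutes {..<s}" and ne: "\<sigma> \<noteq> id" by auto
    then obtain k where "\<sigma> k \<noteq> k" by (auto simp: fun_eq_iff)
    then have k: "k < s" "\<sigma> k \<noteq> k" using permutes_not_in[OF sig, of k] by auto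
    then have "\<xi> k (v (\<sigma> k)) = 0" using z perm_lt[OF sig] by auto
    then have "(\<Prod>k<s. \<xi> k (v (\<sigma> k))) = 0" using k by (intro prod_zero) auto
    then show "?f \<sigma> = 0" by simp
  qed
  finally show ?thesis by simp
qed

lemma one_form_eq: "one_form \<eta> = wedge_list 1 (\<lambda>_. \<eta>)"
proof -
  have "{\<sigma>. \<sigma> permutes {..<Suc 0}} = {id}" by (auto simp: lessThan_Suc)
  then show ?thesis by (auto simp: fun_eq_iff one_form_def wedge_list_def)
qed

lemma one_form_form: "linear \<eta> \<Longrightarrow> is_form 1 (one_form \<eta>)"
  unfolding one_form_eq by (rule wedge_list_form) simp

lemma lin_divc: "linear (f :: 'a::real_vector \<Rightarrow> real) \<Longrightarrow> linear (\<lambda>x. f x / c)"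
  by (simp add: linear_iff add_divide_distrib)

lemma wedge_perm:
  assumes tau: "\<tau> permutes {..<p+q}"
  shows "wedge p q \<alpha> \<beta> (v \<circ> \<tau>) = of_int (sign \<tau>) * wedge p q \<alpha> \<beta> v"
proof -
  let ?P = "{\<sigma>. \<sigma> permutes {..<p+q}}"
  let ?f = "\<lambda>\<sigma>. of_int (sign \<sigma>) * \<alpha> ((v \<circ> \<tau>) \<circ> \<sigma>) * \<beta> (\<lambda>i. (v \<circ> \<tau>) (\<sigma> (p + i)))"
  have pt: "permutation \<tau>" using permutes_imp_permutation[OF _ tau] by simp
  have pit: "inv \<tau> permutes {..<p+q}" using permutes_inv[OF tau] .
  have "(\<Sum>\<sigma>\<in>?P. ?f \<sigma>) = (\<Sum>\<sigma>\<in>?P. ?f (inv \<tau> \<circ> \<sigma>))"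
    by (rule setum_permutations_compose_left[OF pit])
  also have "\<dots> = (\<Sum>\<sigma>\<in>?P. of_int (sign \<tau>) * (of_int (sign \<sigma>) * \<alpha> (v \<circ> \<sigma>) * \<beta> (\<lambda>i. v (\<sigma> (p + i)))))"
  proof (rule sum.cong[OF refl])
    fix \<sigma> assume "\<sigma> \<in> ?P"
    then have ps: "permutation \<sigma>" using permutes_imp_permutation[of "{..<p+q}" \<sigma>] by simp
    have "sign (inv \<tau> \<circ> \<sigma>) = sign \<tau> * sign \<sigma>"
      using pt ps by (simp add: sign_compose sign_inverse permutation_inverse)
    moreover have "(v \<circ> \<tau>) \<circ> (inv \<tau> \<circ> \<sigma>) = v \<circ> \<sigma>"
      using permutes_inverses(1)[OF tau] by (simp add: fun_eq_iff)
    moreover have "(\<lambda>i. (v \<circ> \<tau>) ((inv \<tau> \<circ> \<sigma>) (p + i))) = (\<lambda>i. v (\<sigma> (p + i)))"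
      using permutes_inverses(1)[OF tau] by (simp add: fun_eq_iff)
    ultimately show "?f (inv \<tau> \<circ> \<sigma>) = of_int (sign \<tau>) * (of_int (sign \<sigma>) * \<alpha> (v \<circ> \<sigma>) * \<beta> (\<lambda>i. v (\<sigma> (p + i))))"
      by simp
  qed
  finally show ?thesis
    unfolding wedge_def by (simp add: sum_distrib_left)
qed

lemma wedge_form:
  assumes fa: "is_form p \<alpha>" and fb: "is_form q \<beta>"
  shows "is_form (p+q) (wedge p q \<alpha> \<beta>)"
  unfolding is_form_def
proof (intro conjI allI impI)
  fix v w :: "nat \<Rightarrow> 'a" assume vw: "\<forall>i<p+q. v i = w i"
  have "\<alpha> (v \<circ> \<sigma>) = \<alpha> (w \<circ> \<sigma>) \<and> \<beta> (\<lambda>i. v (\<sigma> (p + i))) = \<beta> (\<lambda>i. w (\<sigma> (p + i)))"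
    if "\<sigma> permutes {..<p+q}" for \<sigma>
    using vw perm_lt[OF that]
    by (intro conjI form_dep[OF fa] form_dep[OF fb]) auto
  then show "wedge p q \<alpha> \<beta> v = wedge p q \<alpha> \<beta> w"
    unfolding wedge_def by (intro arg_cong2[where f="(/)"] sum.cong) auto
next
  fix i v assume i: "i < p+q"
  show "linear (\<lambda>x. wedge p q \<alpha> \<beta> (v(i := x)))"
    unfolding wedge_def
  proof (rule lin_divc, rule linear_compose_sum, rule ballI)
    fix \<sigma> assume "\<sigma> \<in> {\<sigma>. \<sigma> permutes {..<p+q}}"
    then have sig: "\<sigma> permutes {..<p+q}" by simp
    define j where "j = inv \<sigma> i"
    have j: "j < p+q" "\<sigma> j = i"
      using i permutes_inverses(1)[OF sig] perm_lt[OF permutes_inv[OF sig]] by (auto simp: j_def)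
    have sj: "\<sigma> m = i \<longleftrightarrow> m = j" for m
      using j permutes_inj[OF sig] by (auto dest: injD)
    have c1: "(v(i := x)) \<circ> \<sigma> = (v \<circ> \<sigma>)(j := x)" for x
      using sj by (auto simp: fun_eq_iff)
    show "linear (\<lambda>x. of_int (sign \<sigma>) * \<alpha> ((v(i := x)) \<circ> \<sigma>) * \<beta> (\<lambda>k. (v(i := x)) (\<sigma> (p + k))))"
    proof (cases "j < p")
      case True
      have "\<beta> (\<lambda>k. (v(i := x)) (\<sigma> (p + k))) = \<beta> (\<lambda>k. v (\<sigma> (p + k)))" for x
        by (rule form_dep[OF fb]) (use sj True in auto)
      then show ?thesis unfolding c1
        using form_lin[OF fa True, of "v \<circ> \<sigma>"]
        by (simp only:) (intro lin_cmul lin_mulc)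
    next
      case False
      have a: "\<alpha> ((v \<circ> \<sigma>)(j := x)) = \<alpha> (v \<circ> \<sigma>)" for x
        by (rule form_dep[OF fa]) (use False in auto)
      have b: "(\<lambda>k. (v(i := x)) (\<sigma> (p + k))) = (\<lambda>k. v (\<sigma> (p + k)))(j - p := x)" for x
        using sj False by (auto simp: fun_eq_iff)
      have jq: "j - p < q" using j False by simp
      show ?thesis unfolding c1 a b
        using form_lin[OF fb jq, of "\<lambda>k. v (\<sigma> (p + k))"]
        by (intro lin_cmul)
    qed
  qed
next
  fix v :: "nat \<Rightarrow> 'a" and i j
  assume h: "i < p+q \<and> j < p+q \<and> i \<noteq> j \<and> v i = v j"
  have "v \<circ> Transposition.transpose i j = v"
    using h by (auto simp: fun_eq_iff Transposition.transpose_def)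
  moreover have "wedge p q \<alpha> \<beta> (v \<circ> Transposition.transpose i j) = - wedge p q \<alpha> \<beta> v"
    using wedge_perm[of "Transposition.transpose i j" p q \<alpha> \<beta> v] h
    by (simp add: permutes_swap_id sign_swap_id)
  ultimately show "wedge p q \<alpha> \<beta> v = 0" by simp
qed

lemma wedge_zero_row:
  assumes k: "k < s" and z: "\<And>i. i < s+q \<Longrightarrow> \<xi> k (v i) = 0"
  shows "wedge s q (wedge_list s \<xi>) \<beta> v = 0"
proof -
  have "wedge_list s \<xi> (v \<circ> \<sigma>) = 0" if "\<sigma> permutes {..<s+q}" for \<sigma>
    by (rule wedge_list_zero_row[OF k]) (use z perm_lt[OF that] in auto)
  then show ?thesis unfolding wedge_def by (simp add: sum.neutral)
qed

lemma sign_sq_real [simp]: "real_of_int (sign p) * real_of_int (sign p) = 1"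
  by (metis of_int_mult of_int_1 sign_idempotent)

lemma perm_split:
  fixes \<sigma> :: "nat \<Rightarrow> nat" and s q :: nat
  assumes sig: "\<sigma> permutes {..<s+q}" and G: "\<forall>i<s. \<sigma> i < s"
  shows "(\<lambda>x. if x < s then \<sigma> x else x) permutes {..<s}"
    "(\<lambda>x. if x < s then x else \<sigma> x) permutes {s..<s+q}"
    "\<sigma> = (\<lambda>x. if x < s then \<sigma> x else x) \<circ> (\<lambda>x. if x < s then x else \<sigma> x)"
    "\<And>x. s \<le> x \<Longrightarrow> s \<le> \<sigma> x"
proof -
  have inj: "inj \<sigma>" using permutes_inj[OF sig] .
  have injs: "inj_on \<sigma> A" for A using inj_on_subset[OF inj] by simp
  have im: "\<sigma> ` {..<s} = {..<s}"
    using G by (intro endo_inj_surj injs) auto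
  show ge: "s \<le> \<sigma> x" if "s \<le> x" for x
  proof (rule ccontr)
    assume "\<not> s \<le> \<sigma> x"
    then have "\<sigma> x \<in> \<sigma> ` {..<s}" using im by auto
    then obtain y where y: "y < s" "\<sigma> y = \<sigma> x" by auto
    from injD[OF inj y(2)] have "y = x" .
    then show False using y(1) that by simp
  qed
  show "(\<lambda>x. if x < s then \<sigma> x else x) permutes {..<s}"
  proof (rule bij_imp_permutes)
    have "bij_betw \<sigma> {..<s} {..<s}" using im inj by (auto simp: bij_betw_def intro: inj_on_subset)
    then show "bij_betw (\<lambda>x. if x < s then \<sigma> x else x) {..<s} {..<s}"
      by (rule bij_betw_cong[THEN iffD1, rotated]) auto
  qed auto
  show "(\<lambda>x. if x < s then x else \<sigma> x) permutes {s..<s+q}"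
  proof (rule bij_imp_permutes)
    have "\<sigma> ` {s..<s+q} \<subseteq> {s..<s+q}" using ge perm_lt[OF sig] by auto
    then have "\<sigma> ` {s..<s+q} = {s..<s+q}" by (intro endo_inj_surj injs) auto
    then have "bij_betw \<sigma> {s..<s+q} {s..<s+q}" using inj by (auto simp: bij_betw_def intro: inj_on_subset)
    then show "bij_betw (\<lambda>x. if x < s then x else \<sigma> x) {s..<s+q} {s..<s+q}"
      by (rule bij_betw_cong[THEN iffD1, rotated]) auto
  next
    fix x assume "x \<notin> {s..<s+q}"
    then show "(if x < s then x else \<sigma> x) = x" using permutes_not_in[OF sig, of x] by auto
  qed
  show "\<sigma> = (\<lambda>x. if x < s then \<sigma> x else x) \<circ> (\<lambda>x. if x < s then x else \<sigma> x)"
  proof (rule ext)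
    fix x show "\<sigma> x = ((\<lambda>x. if x < s then \<sigma> x else x) \<circ> (\<lambda>x. if x < s then x else \<sigma> x)) x"
    proof (cases "x < s")
      case False
      then have "\<not> \<sigma> x < s" using ge[of x] by simp
      then show ?thesis using False by simp
    qed simp
  qed
qed

lemma card_good_perms:
  fixes s q :: nat
  shows "card {\<sigma>. \<sigma> permutes {..<s+q} \<and> (\<forall>i<s. \<sigma> i < s)} = fact s * fact q"
proof -
  let ?G = "{\<sigma>. \<sigma> permutes {..<s+q} \<and> (\<forall>i<s. \<sigma> i < s)}"
  let ?P1 = "{a. a permutes {..<s}}" and ?P2 = "{b. b permutes {s..<s+q}}"
  let ?f = "\<lambda>(a, b). a \<circ> b"
  let ?g = "\<lambda>\<sigma>. ((\<lambda>x. if x < s then \<sigma> x else x), (\<lambda>x. if x < s then x else \<sigma> (x::nat)))"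
  have "bij_betw ?f (?P1 \<times> ?P2) ?G"
  proof (rule bij_betw_byWitness[where f'="?g"])
    show "\<forall>ab\<in>?P1 \<times> ?P2. ?g (?f ab) = ab"
    proof
      fix ab assume "ab \<in> ?P1 \<times> ?P2"
      then obtain a b where ab: "ab = (a, b)" "a permutes {..<s}" "b permutes {s..<s+q}" by auto
      have b1: "x < s \<Longrightarrow> b x = x" for x using permutes_not_in[OF ab(3), of x] by auto
      have a1: "\<not> x < s \<Longrightarrow> a x = x" for x using permutes_not_in[OF ab(2), of x] by auto
      have b2: "\<not> x < s \<Longrightarrow> \<not> b x < s" for x
        using permutes_in_image[OF ab(3), of x] permutes_not_in[OF ab(3), of x] by (cases "x < s + q") auto
      show "?g (?f ab) = ab" using ab b1 a1 b2 by (auto simp: fun_eq_iff)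
    qed
    show "\<forall>\<sigma>\<in>?G. ?f (?g \<sigma>) = \<sigma>"
    proof
      fix \<sigma> assume "\<sigma> \<in> ?G"
      then have "\<sigma> permutes {..<s+q}" "\<forall>i<s. \<sigma> i < s" by auto
      from perm_split(3)[OF this] show "?f (?g \<sigma>) = \<sigma>" by simp
    qed
    show "?f ` (?P1 \<times> ?P2) \<subseteq> ?G"
    proof
      fix \<sigma> assume "\<sigma> \<in> ?f ` (?P1 \<times> ?P2)"
      then obtain a b where ab: "\<sigma> = a \<circ> b" "a permutes {..<s}" "b permutes {s..<s+q}" by auto
      have "a permutes {..<s+q}" by (rule permutes_subset[OF ab(2)]) auto
      moreover have "b permutes {..<s+q}" by (rule permutes_subset[OF ab(3)]) auto
      ultimately have "a \<circ> b permutes {..<s+q}" by (rule permutes_compose[rotated])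
      moreover have "\<forall>i<s. a (b i) < s"
        using permutes_not_in[OF ab(3)] perm_lt[OF ab(2)] by auto
      ultimately show "\<sigma> \<in> ?G" using ab by auto
    qed
    show "?g ` ?G \<subseteq> ?P1 \<times> ?P2"
      using perm_split(1,2) by auto
  qed
  then have "card ?G = card (?P1 \<times> ?P2)" by (simp add: bij_betw_same_card)
  also have "\<dots> = fact s * fact q"
    by (simp add: card_cartesian_product card_permutations)
  finally show ?thesis .
qed

lemma shift_swap:
  fixes s a b :: nat
  assumes "s \<le> a" "s \<le> b"
  shows "(\<lambda>j. u (Transposition.transpose a b (s + j))) = (\<lambda>j. u (s + j)) \<circ> Transposition.transpose (a - s) (b - s)"
proof -
  have "Transposition.transpose a b (s + j) = s + Transposition.transpose (a - s) (b - s) j" for j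
    using assms by (auto simp add: Transposition.transpose_def split: if_splits; arith)
  then show ?thesis by (simp add: fun_eq_iff)
qed

lemma wedge_eval:
  assumes lin: "\<And>k. k < s \<Longrightarrow> linear (\<xi> k)" and fb: "is_form q \<beta>"
    and w: "\<And>k i. k < s \<Longrightarrow> i < s+q \<Longrightarrow> \<xi> k (w i) = (if i = k then 1 else 0)"
  shows "wedge s q (wedge_list s \<xi>) \<beta> w = \<beta> (\<lambda>j. w (s+j))"
proof -
  let ?P = "{\<sigma>. \<sigma> permutes {..<s+q}}"
  let ?G = "{\<sigma>. \<sigma> permutes {..<s+q} \<and> (\<forall>i<s. \<sigma> i < s)}"
  let ?F = "\<lambda>\<sigma>. of_int (sign \<sigma>) * wedge_list s \<xi> (w \<circ> \<sigma>) * \<beta> (\<lambda>i. w (\<sigma> (s + i)))"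
  define b' where "b' = (\<lambda>u. \<beta> (\<lambda>j. u (s + j)))"
  have fl: "is_form s (wedge_list s \<xi>)" by (rule wedge_list_form[OF lin])
  have finP: "finite ?P" by (rule finite_permutations) simp
  have w1: "wedge_list s \<xi> w = 1"
  proof -
    have "wedge_list s \<xi> w = (\<Prod>k<s. \<xi> k (w k))"
      by (rule wedge_list_diag) (use w in auto)
    also have "\<dots> = 1" using w by (intro prod.neutral) auto
    finally show ?thesis .
  qed
  have b'swap: "b' (u \<circ> Transposition.transpose a b) = - b' u"
    if "a \<in> {s..<s+q}" "b \<in> {s..<s+q}" "a \<noteq> b" for u a b
  proof -
    have "b' (u \<circ> Transposition.transpose a b) = \<beta> ((\<lambda>j. u (s + j)) \<circ> Transposition.transpose (a - s) (b - s))"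
      unfolding b'_def using shift_swap[of s a b u] that by simp
    also have "\<dots> = - b' u" unfolding b'_def
      by (rule form_swap[OF fb]) (use that in auto)
    finally show ?thesis .
  qed
  have zero: "?F \<sigma> = 0" if "\<sigma> \<in> ?P - ?G" for \<sigma>
  proof -
    from that obtain i where i: "i < s" "\<not> \<sigma> i < s" and sig: "\<sigma> permutes {..<s+q}" by auto
    have "wedge_list s \<xi> (w \<circ> \<sigma>) = 0"
      by (rule wedge_list_zero_col[OF i(1)]) (use w i perm_lt[OF sig, of i] in auto)
    then show ?thesis by simp
  qed
  have good: "?F \<sigma> = b' w" if "\<sigma> \<in> ?G" for \<sigma>
  proof -
    from that have sig: "\<sigma> permutes {..<s+q}" and G: "\<forall>i<s. \<sigma> i < s" by auto
    define s1 where "s1 = (\<lambda>x. if x < s then \<sigma> x else x)"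
    define s2 where "s2 = (\<lambda>x. if x < s then x else \<sigma> x)"
    have p1: "s1 permutes {..<s}" unfolding s1_def by (rule perm_split(1)[OF sig G])
    have p2: "s2 permutes {s..<s+q}" unfolding s2_def by (rule perm_split(2)[OF sig G])
    have comp: "\<sigma> = s1 \<circ> s2" unfolding s1_def s2_def by (rule perm_split(3)[OF sig G])
    have pp1: "permutation s1" using permutes_imp_permutation[OF _ p1] by simp
    have pp2: "permutation s2" using permutes_imp_permutation[OF _ p2] by simp
    have sg: "sign \<sigma> = sign s1 * sign s2" using comp pp1 pp2 by (simp add: sign_compose)
    have "wedge_list s \<xi> (w \<circ> \<sigma>) = wedge_list s \<xi> (w \<circ> s1)"
      by (rule form_dep[OF fl]) (auto simp: s1_def)
    also have "\<dots> = of_int (sign s1)" using wedge_list_perm[OF p1, of \<xi> w] w1 by simp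
    finally have A: "wedge_list s \<xi> (w \<circ> \<sigma>) = of_int (sign s1)" .
    have "\<beta> (\<lambda>i. w (\<sigma> (s + i))) = b' (w \<circ> s2)" unfolding b'_def by (simp add: s2_def)
    also have "\<dots> = of_int (sign s2) * b' w"
    proof (rule alt_perm[OF _ p2])
      fix u a b assume "a \<in> {s..<s+q}" "b \<in> {s..<s+q}" "a \<noteq> b"
      then show "b' (u \<circ> Transposition.transpose a b) = - b' u" by (rule b'swap)
    qed simp
    finally have B: "\<beta> (\<lambda>i. w (\<sigma> (s + i))) = of_int (sign s2) * b' w" .
    have "?F \<sigma> = (real_of_int (sign s1) * real_of_int (sign s1)) * (real_of_int (sign s2) * real_of_int (sign s2)) * b' w"
      unfolding A B sg by (simp add: algebra_simps)
    then show ?thesis by (simp only: sign_sq_real mult_1_left)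
  qed
  have "(\<Sum>\<sigma>\<in>?P. ?F \<sigma>) = (\<Sum>\<sigma>\<in>?G. ?F \<sigma>)"
    using finP zero by (intro sum.mono_neutral_right) auto
  also have "\<dots> = (\<Sum>\<sigma>\<in>?G. b' w)" using good by (rule sum.cong[OF refl])
  also have "\<dots> = of_nat (fact s * fact q) * b' w" by (simp add: card_good_perms)
  finally have "(\<Sum>\<sigma>\<in>?P. ?F \<sigma>) = (fact s * fact q) * b' w" by simp
  then show ?thesis unfolding wedge_def b'_def by simp
qed

lemma wedge_eval1:
  assumes lin: "linear \<eta>" and fb: "is_form q \<beta>" and y: "\<eta> y = 1"
    and d: "\<And>i. i < q \<Longrightarrow> \<eta> (d i) = 0"
  shows "wedge 1 q (one_form \<eta>) \<beta> (\<lambda>i. if i = 0 then y else d (i - 1)) = \<beta> d"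
proof -
  have "wedge 1 q (wedge_list 1 (\<lambda>_. \<eta>)) \<beta> (\<lambda>i. if i = 0 then y else d (i - 1)) =
        \<beta> (\<lambda>j. (\<lambda>i. if i = 0 then y else d (i - 1)) (1 + j))"
    by (rule wedge_eval) (use lin fb y d in auto)
  then show ?thesis by (simp add: one_form_eq)
qed

lemma zero_form: "is_form p (\<lambda>v. 0)"
  by (simp add: is_form_def linear_iff)

lemma form_span_ext:
  assumes fg: "is_form p g" "is_form p h" and eq: "\<And>v. (\<forall>i<p. v i \<in> B) \<Longrightarrow> g v = h v"
    and v: "\<forall>i<p. v i \<in> span B"
  shows "g v = h v"
proof -
  have "\<forall>v. (\<forall>i<p. v i \<in> span B) \<and> (\<forall>i. k \<le> i \<and> i < p \<longrightarrow> v i \<in> B) \<longrightarrow> g v = h v"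
    if "k \<le> p" for k
    using that
  proof (induction k)
    case 0
    then show ?case using eq by auto
  next
    case (Suc k)
    show ?case
    proof (intro allI impI)
      fix v assume hv: "(\<forall>i<p. v i \<in> span B) \<and> (\<forall>i. Suc k \<le> i \<and> i < p \<longrightarrow> v i \<in> B)"
      have kp: "k < p" using Suc.prems by simp
      have "g (v(k := v k)) = h (v(k := v k))"
      proof (rule linear_eq_on_span[OF form_lin[OF fg(1) kp] form_lin[OF fg(2) kp]])
        fix b assume b: "b \<in> B"
        show "g (v(k := b)) = h (v(k := b))"
        proof -
          have a1: "\<forall>i<p. (v(k:=b)) i \<in> span B" using hv span_base[OF b] by auto
          have a2: "\<forall>i. k \<le> i \<and> i < p \<longrightarrow> (v(k:=b)) i \<in> B"
          proof (intro allI impI)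
            fix i assume "k \<le> i \<and> i < p"
            then show "(v(k:=b)) i \<in> B" using hv b by (cases "i = k") auto
          qed
          show ?thesis using Suc.IH[OF Suc_leD[OF Suc.prems]] a1 a2 by blast
        qed
      next
        show "v k \<in> span B" using hv kp by simp
      qed
      then show "g v = h v" by simp
    qed
  qed
  from this[OF le_refl] v show ?thesis by auto
qed

lemma form_agree:
  fixes e :: "nat \<Rightarrow> 'v::real_vector"
  assumes fg: "is_form p g" "is_form p h" and sp: "s \<le> p" and inj: "inj_on e {..<s}"
    and miss: "\<And>v k. (\<forall>i<p. v i \<in> e ` {..<s} \<union> D) \<Longrightarrow> k < s \<Longrightarrow> (\<forall>i<p. v i \<noteq> e k) \<Longrightarrow> g v = h v"
    and main: "\<And>v. (\<forall>i<s. v i = e i) \<Longrightarrow> (\<forall>i. s \<le> i \<and> i < p \<longrightarrow> v i \<in> D) \<Longrightarrow> g v = h v"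
    and v: "\<forall>i<p. v i \<in> span (e ` {..<s} \<union> D)"
  shows "g v = h v"
proof (rule form_span_ext[OF fg _ v])
  let ?B = "e ` {..<s} \<union> D"
  have "\<forall>v. card {i. i < s \<and> v i \<noteq> e i} = m \<longrightarrow> (\<forall>i<p. v i \<in> ?B) \<longrightarrow> g v = h v" for m
  proof (induction m rule: less_induct)
    case (less m)
    show ?case
    proof (intro allI impI)
      fix v assume cm: "card {i. i < s \<and> v i \<noteq> e i} = m" and vB: "\<forall>i<p. v i \<in> ?B"
      show "g v = h v"
      proof (cases "\<exists>i<s. v i \<noteq> e i")
        case False
        then have ve: "\<forall>i<s. v i = e i" by auto
        show ?thesis
        proof (cases "\<exists>i. s \<le> i \<and> i < p \<and> v i \<notin> D")
          case True
          then obtain i where i: "s \<le> i" "i < p" "v i \<notin> D" by auto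
          then obtain k where k: "k < s" "v i = e k" using vB by auto
          then have "v i = v k" using ve by simp
          moreover have "k \<noteq> i" "k < p" using k i by auto
          ultimately have "g v = 0" "h v = 0"
            using form_alt[OF fg(1) i(2) \<open>k < p\<close>] form_alt[OF fg(2) i(2) \<open>k < p\<close>] by auto
          then show ?thesis by simp
        next
          case False
          then show ?thesis using main ve by auto
        qed
      next
        case True
        then obtain i where i: "i < s" "v i \<noteq> e i" by auto
        show ?thesis
        proof (cases "\<exists>j<p. v j = e i")
          case False
          then show ?thesis using miss[OF vB i(1)] by auto
        next
          case True
          then obtain j where j: "j < p" "v j = e i" by auto
          have ij: "i \<noteq> j" using i j by auto
          have ip: "i < p" using i sp by simp
          define v' where "v' = v \<circ> Transposition.transpose i j"
          have v'B: "\<forall>l<p. v' l \<in> ?B"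
            using vB ip j(1) by (auto simp: v'_def Transposition.transpose_def)
          have sub: "{l. l < s \<and> v' l \<noteq> e l} \<subseteq> {l. l < s \<and> v l \<noteq> e l} - {i}"
          proof
            fix l assume l: "l \<in> {l. l < s \<and> v' l \<noteq> e l}"
            show "l \<in> {l. l < s \<and> v l \<noteq> e l} - {i}"
            proof (cases "l = i")
              case True then show ?thesis using l j by (simp add: v'_def)
            next
              case li: False
              show ?thesis
              proof (cases "l = j")
                case True
                then have "e i \<noteq> e j" using inj ij i l by (auto dest: inj_onD)
                then show ?thesis using True l j li by auto
              next
                case False
                then show ?thesis using l li by (simp add: v'_def Transposition.transpose_def)
              qed
            qed
          qed
          have "card {l. l < s \<and> v' l \<noteq> e l} < m"
          proof -
            have "card {l. l < s \<and> v' l \<noteq> e l} \<le> card ({l. l < s \<and> v l \<noteq> e l} - {i})"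
              by (rule card_mono[OF _ sub]) auto
            also have "\<dots> < card {l. l < s \<and> v l \<noteq> e l}"
              using i by (intro card_Diff1_less) auto
            finally show ?thesis using cm by simp
          qed
          then have "g v' = h v'" using less.IH v'B by blast
          moreover have "g v' = - g v" "h v' = - h v"
            unfolding v'_def using form_swap[OF fg(1) ip j(1) ij] form_swap[OF fg(2) ip j(1) ij] by auto
          ultimately show ?thesis by simp
        qed
      qed
    qed
  qed
  then show "\<And>v. \<forall>i<p. v i \<in> ?B \<Longrightarrow> g v = h v" by blast
qed

lemma div_vanish:
  assumes lin: "linear \<eta>" and fb: "is_form q \<beta>" and y: "\<eta> y = 1" "y \<in> U"
    and wz: "\<And>v. (\<forall>i<q+1. v i \<in> U) \<Longrightarrow> wedge 1 q (one_form \<eta>) \<beta> v = 0"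
    and d: "\<And>i. i < q \<Longrightarrow> d i \<in> U \<and> \<eta> (d i) = 0"
  shows "\<beta> d = 0"
proof -
  have "\<beta> d = wedge 1 q (one_form \<eta>) \<beta> (\<lambda>i. if i = 0 then y else d (i - 1))"
    by (rule wedge_eval1[OF lin fb y(1), symmetric]) (use d in auto)
  also have "\<dots> = 0" by (rule wz) (use d y in auto)
  finally show ?thesis .
qed

lemma conv_div:
  assumes lin: "linear \<eta>" and y: "\<eta> y = 1" and fm: "is_form p \<mu>"
    and van: "\<And>v. (\<forall>i<p. \<eta> (v i) = 0) \<Longrightarrow> \<mu> v = 0"
  shows "wedge 1 p (one_form \<eta>) \<mu> = (\<lambda>v. 0)"
proof
  fix v :: "nat \<Rightarrow> 'a"
  let ?D = "{x. \<eta> x = 0}"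
  have fw: "is_form (1+p) (wedge 1 p (one_form \<eta>) \<mu>)"
    by (rule wedge_form[OF one_form_form[OF lin] fm])
  have sp: "x \<in> span ((\<lambda>_. y) ` {..<1::nat} \<union> ?D)" for x
  proof -
    have "x = \<eta> x *\<^sub>R y + (x - \<eta> x *\<^sub>R y)" by simp
    moreover have "y \<in> span ((\<lambda>_. y) ` {..<1::nat} \<union> ?D)" proof (intro span_base UnI1)
      show "y \<in> (\<lambda>_. y) ` {..<1::nat}" by (rule image_eqI[of _ _ 0]) auto
    qed
    moreover have "x - \<eta> x *\<^sub>R y \<in> span ((\<lambda>_. y) ` {..<1::nat} \<union> ?D)"
      using lin y by (intro span_base) (auto simp: linear_diff linear_cmul)
    ultimately show ?thesis by (metis span_add span_mul)
  qed
  show "wedge 1 p (one_form \<eta>) \<mu> v = 0"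
  proof (rule form_agree[OF fw zero_form, of 1 "\<lambda>_. y" ?D])
    fix v k assume vB: "\<forall>i<1+p. v i \<in> (\<lambda>_. y) ` {..<1::nat} \<union> ?D" and k: "k < 1"
      and nm: "\<forall>i<1+p. v i \<noteq> y"
    have "\<forall>i<1+p. \<eta> (v i) = 0" using vB nm by auto
    then show "wedge 1 p (one_form \<eta>) \<mu> v = 0"
      unfolding one_form_eq by (intro wedge_zero_row[of 0]) auto
  next
    fix v assume v0: "\<forall>i<1. v i = y" and vD: "\<forall>i. 1 \<le> i \<and> i < 1 + p \<longrightarrow> v i \<in> ?D"
    have "wedge 1 p (wedge_list 1 (\<lambda>_. \<eta>)) \<mu> v = \<mu> (\<lambda>j. v (1 + j))"
      by (rule wedge_eval) (use lin fm v0 vD y in auto)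
    also have "\<dots> = 0" by (rule van) (use vD in auto)
    finally show "wedge 1 p (one_form \<eta>) \<mu> v = 0" by (simp add: one_form_eq)
  qed (use sp in \<open>auto simp: lessThan_Suc\<close>)
qed

lemma lin_sum_scale: "linear (f :: 'a::real_vector \<Rightarrow> real) \<Longrightarrow> f (\<Sum>k\<in>S. c k *\<^sub>R e k) = (\<Sum>k\<in>S. c k * f (e k))"
  by (simp add: linear_sum linear_scale)

lemma lin_scaleR_const: "linear (f :: 'a::real_vector \<Rightarrow> real) \<Longrightarrow> linear (\<lambda>x. f x *\<^sub>R (c::'b::real_vector))"
  by (simp add: linear_iff scaleR_add_left)

definition rep :: "('v::euclidean_space \<Rightarrow> real) \<Rightarrow> 'v" where
  "rep \<eta> = (\<Sum>b\<in>Basis. \<eta> b *\<^sub>R b)"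

lemma lin_repr: "linear \<eta> \<Longrightarrow> \<eta> x = rep \<eta> \<bullet> x"
proof -
  assume lin: "linear \<eta>"
  have "\<eta> x = \<eta> (\<Sum>b\<in>Basis. (x \<bullet> b) *\<^sub>R b)" by (simp add: euclidean_representation)
  also have "\<dots> = (\<Sum>b\<in>Basis. (x \<bullet> b) * \<eta> b)" by (rule lin_sum_scale[OF lin])
  also have "\<dots> = (\<Sum>b\<in>Basis. \<eta> b * (b \<bullet> x))" by (intro sum.cong refl) (simp add: inner_commute)
  also have "\<dots> = rep \<eta> \<bullet> x" unfolding rep_def by (simp add: inner_sum_left)
  finally show ?thesis .
qed

lemma inner_self_zero: "(\<forall>x. z \<bullet> x = (0::real)) \<Longrightarrow> z = 0"
  by (metis inner_eq_zero_iff)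

lemma dual_exists:
  fixes \<xi> :: "nat \<Rightarrow> 'v::euclidean_space \<Rightarrow> real"
  assumes lin: "\<And>k. k < s \<Longrightarrow> linear (\<xi> k)" and ind: "fun_lin_indep s \<xi>" and sn: "s \<le> DIM('v)"
  shows "\<exists>e. \<forall>k<s. \<forall>j<s. \<xi> k (e j) = (if k = j then 1 else 0)"
proof -
  obtain u where u: "bij_betw u {0..<card (Basis::'v set)} (Basis::'v set)"
    by (metis ex_bij_betw_nat_finite finite_Basis)
  have uB: "j < s \<Longrightarrow> u j \<in> Basis" for j using u sn by (auto simp: bij_betw_def)
  have uinj: "j < s \<Longrightarrow> k < s \<Longrightarrow> u j = u k \<Longrightarrow> j = k" for j k
    using u sn by (auto simp: bij_betw_def inj_on_def)
  have uu: "j < s \<Longrightarrow> k < s \<Longrightarrow> u j \<bullet> u k = (if j = k then 1 else 0)" for j k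
  proof -
    assume j: "j < s" and k: "k < s"
    have "u j \<bullet> u k = (if u j = u k then 1 else 0)" by (rule inner_Basis[OF uB[OF j] uB[OF k]])
    then show ?thesis using uinj[OF j k] by auto
  qed
  define L where "L x = (\<Sum>i<s. \<xi> i x *\<^sub>R u i)" for x
  have linL: "linear L" unfolding L_def
    by (intro linear_compose_sum ballI lin_scaleR_const lin) auto
  have Lu: "k < s \<Longrightarrow> L x \<bullet> u k = \<xi> k x" for x k
  proof -
    assume k: "k < s"
    have "L x \<bullet> u k = (\<Sum>i<s. \<xi> i x * (u i \<bullet> u k))" unfolding L_def by (simp add: inner_sum_left)
    also have "\<dots> = (\<Sum>i<s. if i = k then \<xi> i x else 0)" using uu k by (intro sum.cong) auto
    also have "\<dots> = \<xi> k x" using k by simp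
    finally show ?thesis .
  qed
  let ?T = "u ` {..<s}"
  have rT: "range L \<subseteq> span ?T"
  proof
    fix y assume "y \<in> range L"
    then obtain x where "y = L x" by auto
    then have y: "y = (\<Sum>i<s. \<xi> i x *\<^sub>R u i)" by (simp add: L_def)
    have "(\<Sum>i<s. \<xi> i x *\<^sub>R u i) \<in> span ?T" by (intro span_sum span_mul span_base) auto
    then show "y \<in> span ?T" using y by simp
  qed
  have allin: "u j \<in> range L" if j: "j < s" for j
  proof (rule ccontr)
    assume nin: "u j \<notin> range L"
    have subL: "subspace (range L)" using linear_subspace_image[OF linL subspace_UNIV] by simp
    have sr: "span (range L) = range L" using subL by (simp add: span_eq_iff)
    have sub: "span (range L) \<subseteq> span ?T" using span_mono[OF rT] by (simp add: span_span)
    have ujT: "u j \<in> span ?T" using j by (intro span_base) auto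
    have "span (range L) \<noteq> span ?T"
    proof
      assume "span (range L) = span ?T"
      then have "u j \<in> span (range L)" using ujT by simp
      then show False using nin sr by (metis)
    qed
    with sub have pss: "span (range L) \<subset> span ?T" by auto
    then obtain z where z: "z \<noteq> 0" "z \<in> span ?T" "\<And>y. y \<in> span (range L) \<Longrightarrow> orthogonal z y"
      using orthogonal_to_subspace_exists_gen[OF pss] by blast
    have "\<forall>x. (\<Sum>i<s. (z \<bullet> u i) * \<xi> i x) = 0"
    proof
      fix x
      have "L x \<in> span (range L)" by (simp add: span_base)
      then have "z \<bullet> L x = 0" using z(3) by (simp add: orthogonal_def)
      then show "(\<Sum>i<s. (z \<bullet> u i) * \<xi> i x) = 0" unfolding L_def by (simp add: inner_sum_right mult.commute)
    qed
    moreover from ind have "(\<forall>x. (\<Sum>i<s. (\<lambda>i. z \<bullet> u i) i * \<xi> i x) = 0) \<longrightarrow> (\<forall>i<s. (\<lambda>i. z \<bullet> u i) i = 0)"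
      unfolding fun_lin_indep_def by (rule spec)
    ultimately have zu: "\<forall>i<s. z \<bullet> u i = 0" by simp
    have "span ?T \<subseteq> {w. z \<bullet> w = 0}"
      by (rule span_minimal) (use zu subspace_hyperplane in auto)
    then have "z \<bullet> z = 0" using z(2) by blast
    then show False using z(1) by simp
  qed
  define e where "e j = (SOME x. L x = u j)" for j
  have Le: "j < s \<Longrightarrow> L (e j) = u j" for j
    using allin unfolding e_def by (metis (mono_tags, lifting) image_iff someI)
  show ?thesis
  proof (intro exI allI impI)
    fix k j assume k: "k < s" and j: "j < s"
    have "\<xi> k (e j) = L (e j) \<bullet> u k" using Lu[OF k] by simp
    also have "\<dots> = (if k = j then 1 else 0)" using Le[OF j] uu[OF j k] by auto
    finally show "\<xi> k (e j) = (if k = j then 1 else 0)" .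
  qed
qed

lemma dual_eval_sum:
  fixes s j :: nat
  assumes lin: "linear (\<xi> j)" and dual: "\<And>k. k < s \<Longrightarrow> \<xi> j (e k) = (if j = k then 1 else 0)" and j: "j < s"
  shows "\<xi> j (\<Sum>k<s. c k *\<^sub>R e k) = c j"
proof -
  have "\<xi> j (\<Sum>k<s. c k *\<^sub>R e k) = (\<Sum>k<s. c k * \<xi> j (e k))" by (rule lin_sum_scale[OF lin])
  also have "\<dots> = (\<Sum>k<s. if k = j then c k else 0)" using dual by (intro sum.cong) auto
  also have "\<dots> = c j" using j by simp
  finally show ?thesis .
qed

lemma span_ED:
  fixes s :: nat
  assumes lin: "\<And>k. k < s \<Longrightarrow> linear (\<xi> k)"
    and dual: "\<And>k j. k < s \<Longrightarrow> j < s \<Longrightarrow> \<xi> k (e j) = (if k = j then 1 else 0)"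
  shows "x - (\<Sum>k<s. \<xi> k x *\<^sub>R e k) \<in> {x. \<forall>k<s. \<xi> k x = 0}"
    and "x \<in> span (e ` {..<s} \<union> {x. \<forall>k<s. \<xi> k x = 0})"
proof -
  show d: "x - (\<Sum>k<s. \<xi> k x *\<^sub>R e k) \<in> {x. \<forall>k<s. \<xi> k x = 0}"
  proof (intro CollectI allI impI)
    fix k assume k: "k < s"
    have "\<xi> k (x - (\<Sum>k<s. \<xi> k x *\<^sub>R e k)) = \<xi> k x - \<xi> k (\<Sum>k<s. \<xi> k x *\<^sub>R e k)"
      using lin[OF k] by (simp add: linear_diff)
    also have "\<xi> k (\<Sum>k<s. \<xi> k x *\<^sub>R e k) = \<xi> k x"
      by (rule dual_eval_sum[where \<xi>=\<xi> and j=k, OF lin[OF k] dual[OF k] k])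
    finally show "\<xi> k (x - (\<Sum>k<s. \<xi> k x *\<^sub>R e k)) = 0" by simp
  qed
  have "(\<Sum>k<s. \<xi> k x *\<^sub>R e k) \<in> span (e ` {..<s} \<union> {x. \<forall>k<s. \<xi> k x = 0})"
    by (intro span_sum span_mul span_base) auto
  moreover have "x - (\<Sum>k<s. \<xi> k x *\<^sub>R e k) \<in> span (e ` {..<s} \<union> {x. \<forall>k<s. \<xi> k x = 0})"
    using d by (intro span_base) auto
  ultimately have "(\<Sum>k<s. \<xi> k x *\<^sub>R e k) + (x - (\<Sum>k<s. \<xi> k x *\<^sub>R e k)) \<in> span (e ` {..<s} \<union> {x. \<forall>k<s. \<xi> k x = 0})"
    by (rule span_add)
  then show "x \<in> span (e ` {..<s} \<union> {x. \<forall>k<s. \<xi> k x = 0})" by simp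
qed

lemma div_space_eq:
  assumes fb: "fun_basis_of s \<xi> (div_polar p \<mu>)"
  shows "div_space UNIV p \<mu> = {x. \<forall>k<s. \<xi> k x = 0}"
proof -
  have D: "div_space UNIV p \<mu> = {x. \<forall>\<eta>\<in>div_polar p \<mu>. \<eta> x = 0}"
    unfolding div_space_def div_polar_def by (auto simp: fun_eq_iff)
  show ?thesis unfolding D
  proof (intro set_eqI iffI)
    fix x assume "x \<in> {x. \<forall>\<eta>\<in>div_polar p \<mu>. \<eta> x = 0}"
    then show "x \<in> {x. \<forall>k<s. \<xi> k x = 0}" using fb unfolding fun_basis_of_def by auto
  next
    fix x assume x: "x \<in> {x. \<forall>k<s. \<xi> k x = 0}"
    show "x \<in> {x. \<forall>\<eta>\<in>div_polar p \<mu>. \<eta> x = 0}"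
    proof (intro CollectI ballI)
      fix \<eta> assume "\<eta> \<in> div_polar p \<mu>"
      then obtain c where "\<forall>x. \<eta> x = (\<Sum>i<s. c i * \<xi> i x)" using fb unfolding fun_basis_of_def by blast
      then show "\<eta> x = 0" using x by simp
    qed
  qed
qed

lemma fb_lin: "fun_basis_of s \<xi> (div_polar p \<mu>) \<Longrightarrow> k < s \<Longrightarrow> linear (\<xi> k)"
  unfolding fun_basis_of_def div_polar_def by auto

lemma fb_wedge: "fun_basis_of s \<xi> (div_polar p \<mu>) \<Longrightarrow> k < s \<Longrightarrow> wedge 1 p (one_form (\<xi> k)) \<mu> = (\<lambda>v. 0)"
  unfolding fun_basis_of_def div_polar_def by auto

lemma fb_indep: "fun_basis_of s \<xi> S \<Longrightarrow> fun_lin_indep s \<xi>"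
  unfolding fun_basis_of_def by auto

lemma wedge1_comb:
  assumes h: "\<And>x. h x = a * f x + b * g x"
  shows "wedge 1 p (one_form h) \<mu> v = a * wedge 1 p (one_form f) \<mu> v + b * wedge 1 p (one_form g) \<mu> v"
  unfolding wedge_def one_form_def h
  by (simp add: algebra_simps sum.distrib sum_distrib_left add_divide_distrib)

lemma D_char: "div_space UNIV p \<mu> = {x. \<forall>\<eta>\<in>div_polar p \<mu>. \<eta> x = 0}"
  unfolding div_space_def div_polar_def by (auto simp: fun_eq_iff)

lemma lin_inner: "linear (\<lambda>x. a \<bullet> (x::'a::real_inner))"
  by (simp add: linear_iff inner_add_right)

lemma polar_basis:
  fixes \<mu> :: "(nat \<Rightarrow> 'v::euclidean_space) \<Rightarrow> real"
  shows "\<exists>\<xi>. fun_basis_of (DIM('v) - dim (div_space UNIV p \<mu>)) \<xi> (div_polar p \<mu>)"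
proof -
  define A where "A = {a::'v. (\<lambda>x. a \<bullet> x) \<in> div_polar p \<mu>}"
  have inA: "a \<in> A \<longleftrightarrow> (\<forall>v. wedge 1 p (one_form (\<lambda>x. a \<bullet> x)) \<mu> v = 0)" for a
    unfolding A_def div_polar_def using lin_inner by (auto simp: fun_eq_iff)
  have subA: "subspace A"
    unfolding subspace_def
  proof (intro conjI ballI allI)
    have e: "(\<lambda>x. (0::'v) \<bullet> x) = (\<lambda>x. 0)" by auto
    show "0 \<in> A" unfolding inA e
      using wedge1_comb[of "\<lambda>x. 0" 0 "\<lambda>x. 0" 0 "\<lambda>x. 0" p \<mu>] by simp
  next
    fix x y assume "x \<in> A" "y \<in> A"
    moreover have "wedge 1 p (one_form (\<lambda>z. (x + y) \<bullet> z)) \<mu> v = 1 * wedge 1 p (one_form (\<lambda>z. x \<bullet> z)) \<mu> v + 1 * wedge 1 p (one_form (\<lambda>z. y \<bullet> z)) \<mu> v" for v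
      by (rule wedge1_comb) (simp add: inner_add_left)
    ultimately show "x + y \<in> A" unfolding inA by simp
  next
    fix c x assume "x \<in> A"
    moreover have "wedge 1 p (one_form (\<lambda>z. (c *\<^sub>R x) \<bullet> z)) \<mu> v = c * wedge 1 p (one_form (\<lambda>z. x \<bullet> z)) \<mu> v + 0 * wedge 1 p (one_form (\<lambda>z. x \<bullet> z)) \<mu> v" for v
      by (rule wedge1_comb) simp
    ultimately show "c *\<^sub>R x \<in> A" unfolding inA by (simp del: inner_scaleR_left)
  qed
  have repA: "\<eta> \<in> div_polar p \<mu> \<Longrightarrow> rep \<eta> \<in> A" for \<eta>
  proof -
    assume e: "\<eta> \<in> div_polar p \<mu>"
    then have "linear \<eta>" unfolding div_polar_def by simp
    then have "(\<lambda>x. rep \<eta> \<bullet> x) = \<eta>" using lin_repr[of \<eta>] by (auto simp: fun_eq_iff)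
    then show ?thesis using e unfolding A_def by simp
  qed
  have Deq: "div_space UNIV p \<mu> = {y. \<forall>x\<in>A. orthogonal x y}"
    unfolding D_char
  proof (intro set_eqI iffI CollectI ballI)
    fix y a assume "y \<in> {x. \<forall>\<eta>\<in>div_polar p \<mu>. \<eta> x = 0}" "a \<in> A"
    then show "orthogonal a y" unfolding A_def orthogonal_def by auto
  next
    fix y \<eta> assume y: "y \<in> {y. \<forall>x\<in>A. orthogonal x y}" and e: "\<eta> \<in> div_polar p \<mu>"
    have "linear \<eta>" using e unfolding div_polar_def by simp
    then have "\<eta> y = rep \<eta> \<bullet> y" by (rule lin_repr)
    then show "\<eta> y = 0" using y repA[OF e] by (auto simp: orthogonal_def)
  qed
  have "dim {y \<in> UNIV. \<forall>x\<in>A. orthogonal x y} + dim A = dim (UNIV::'v set)"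
    by (rule dim_subspace_orthogonal_to_vectors[OF subA subspace_UNIV subset_UNIV])
  then have sA: "DIM('v) - dim (div_space UNIV p \<mu>) = dim A" unfolding Deq by simp
  obtain B where B: "B \<subseteq> A" "independent B" "A \<subseteq> span B" "card B = dim A"
    using basis_exists[of A] by blast
  have finB: "finite B" using B(2) by (rule independent_imp_finite)
  obtain u where u: "bij_betw u {..<dim A} B"
    using ex_bij_betw_nat_finite[OF finB] B(4) by (metis atLeast0LessThan)
  have uB: "i < dim A \<Longrightarrow> u i \<in> B" for i using u by (auto simp: bij_betw_def)
  have inv_u: "i < dim A \<Longrightarrow> inv_into {..<dim A} u (u i) = i" for i
    using u by (auto simp: bij_betw_def inv_into_f_f)
  define \<xi> where "\<xi> i = (\<lambda>x. u i \<bullet> x)" for i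
  have "fun_basis_of (dim A) \<xi> (div_polar p \<mu>)"
    unfolding fun_basis_of_def
  proof (intro conjI allI impI ballI)
    fix i assume "i < dim A"
    then show "\<xi> i \<in> div_polar p \<mu>" using uB B(1) unfolding A_def \<xi>_def by auto
  next
    show "fun_lin_indep (dim A) \<xi>"
      unfolding fun_lin_indep_def
    proof (intro allI impI)
      fix c i assume h: "\<forall>x. (\<Sum>i<dim A. c i * \<xi> i x) = 0" and i: "i < dim A"
      define z where "z = (\<Sum>i<dim A. c i *\<^sub>R u i)"
      have "\<forall>x. z \<bullet> x = 0" using h unfolding z_def \<xi>_def by (simp add: inner_sum_left)
      then have z0: "z = 0" by (rule inner_self_zero)
      define f where "f b = c (inv_into {..<dim A} u b)" for b
      have "(\<Sum>b\<in>B. f b *\<^sub>R b) = (\<Sum>j<dim A. f (u j) *\<^sub>R u j)"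
        by (rule sum.reindex_bij_betw[OF u, symmetric])
      also have "\<dots> = z" unfolding z_def f_def using inv_u by (intro sum.cong) auto
      finally have "(\<Sum>b\<in>B. f b *\<^sub>R b) = 0" using z0 by simp
      then have "\<forall>b\<in>B. f b = 0" using B(2) finB dependent_finite by blast
      then show "c i = 0" using uB[OF i] inv_u[OF i] unfolding f_def by force
    qed
  next
    fix \<eta> assume e: "\<eta> \<in> div_polar p \<mu>"
    have lin: "linear \<eta>" using e unfolding div_polar_def by simp
    have "rep \<eta> \<in> span B" using repA[OF e] B(3) by auto
    then obtain f where f: "rep \<eta> = (\<Sum>b\<in>B. f b *\<^sub>R b)" using span_finite[OF finB] by auto
    show "\<exists>c. \<forall>x. \<eta> x = (\<Sum>i<dim A. c i * \<xi> i x)"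
    proof (intro exI allI)
      fix x
      have "\<eta> x = rep \<eta> \<bullet> x" by (rule lin_repr[OF lin])
      also have "\<dots> = (\<Sum>b\<in>B. f b * (b \<bullet> x))" unfolding f by (simp add: inner_sum_left)
      also have "\<dots> = (\<Sum>i<dim A. f (u i) * (u i \<bullet> x))"
        by (rule sum.reindex_bij_betw[OF u, symmetric])
      finally show "\<eta> x = (\<Sum>i<dim A. (\<lambda>i. f (u i)) i * \<xi> i x)" unfolding \<xi>_def by simp
    qed
  qed
  then show ?thesis unfolding sA by blast
qed

definition catv :: "nat \<Rightarrow> (nat \<Rightarrow> 'v) \<Rightarrow> (nat \<Rightarrow> 'v) \<Rightarrow> nat \<Rightarrow> 'v" where
  "catv s e d = (\<lambda>i. if i < s then e i else d (i - s))"

lemma catv_form: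
  assumes fm: "is_form p \<mu>" and sp: "s \<le> p"
  shows "is_form (p - s) (\<lambda>d. \<mu> (catv s e d))"
  unfolding is_form_def
proof (intro conjI allI impI)
  fix v w :: "nat \<Rightarrow> 'a" assume "\<forall>i<p - s. v i = w i"
  then show "\<mu> (catv s e v) = \<mu> (catv s e w)"
    by (intro form_dep[OF fm]) (auto simp: catv_def)
next
  fix i v assume i: "i < p - s"
  have "catv s e (v(i := x)) = (catv s e v)(s + i := x)" for x
    by (auto simp: catv_def fun_eq_iff)
  then show "linear (\<lambda>x. \<mu> (catv s e (v(i := x))))"
    using form_lin[OF fm, of "s + i" "catv s e v"] i by simp
next
  fix v :: "nat \<Rightarrow> 'a" and i j assume h: "i < p - s \<and> j < p - s \<and> i \<noteq> j \<and> v i = v j"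
  show "\<mu> (catv s e v) = 0"
    by (rule form_alt[OF fm, of "s + i" "s + j"]) (use h in \<open>auto simp: catv_def\<close>)
qed

lemma catv_form2:
  assumes fm: "is_form p \<mu>" and sp: "s \<le> p"
  shows "is_form s (\<lambda>x. \<mu> (catv s x d))"
  unfolding is_form_def
proof (intro conjI allI impI)
  fix v w :: "nat \<Rightarrow> 'a" assume "\<forall>i<s. v i = w i"
  then show "\<mu> (catv s v d) = \<mu> (catv s w d)"
    by (intro form_dep[OF fm]) (auto simp: catv_def)
next
  fix i v assume i: "i < s"
  have "catv s (v(i := x)) d = (catv s v d)(i := x)" for x
    using i by (auto simp: catv_def fun_eq_iff)
  then show "linear (\<lambda>x. \<mu> (catv s (v(i := x)) d))"
    using form_lin[OF fm, of i "catv s v d"] i sp by simp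
next
  fix v :: "nat \<Rightarrow> 'a" and i j assume h: "i < s \<and> j < s \<and> i \<noteq> j \<and> v i = v j"
  show "\<mu> (catv s v d) = 0"
    by (rule form_alt[OF fm, of i j]) (use h sp in \<open>auto simp: catv_def\<close>)
qed

locale sett =
  fixes p :: nat and \<mu> :: "(nat \<Rightarrow> 'v::euclidean_space) \<Rightarrow> real" and s :: nat
    and \<xi> :: "nat \<Rightarrow> 'v \<Rightarrow> real" and e :: "nat \<Rightarrow> 'v"
  assumes fm: "is_form p \<mu>" and nz: "\<mu> \<noteq> (\<lambda>v. 0)"
    and fb: "fun_basis_of s \<xi> (div_polar p \<mu>)"
    and dual: "\<And>k j. k < s \<Longrightarrow> j < s \<Longrightarrow> \<xi> k (e j) = (if k = j then 1 else 0)"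
begin

abbreviation "D \<equiv> div_space UNIV p \<mu>"

lemma lin: "k < s \<Longrightarrow> linear (\<xi> k)" using fb_lin[OF fb] .

lemma Deq: "D = {x. \<forall>k<s. \<xi> k x = 0}" using div_space_eq[OF fb] .

lemma inj_e: "inj_on e {..<s}"
proof (rule inj_onI)
  fix i j assume "i \<in> {..<s}" "j \<in> {..<s}" "e i = e j"
  then have "\<xi> i (e i) = \<xi> i (e j)" by simp
  then show "i = j" using dual \<open>i \<in> {..<s}\<close> \<open>j \<in> {..<s}\<close> by (auto split: if_splits)
qed

lemma spanD: "x \<in> span (e ` {..<s} \<union> D)"
  unfolding Deq by (rule span_ED(2)[OF lin dual])

lemma S1:
  assumes k: "k < s" and z: "\<And>i. i < p \<Longrightarrow> \<xi> k (v i) = 0"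
  shows "\<mu> v = 0"
proof (rule div_vanish[OF lin[OF k] fm, of "e k" UNIV])
  show "\<xi> k (e k) = 1" using dual k by simp
  fix w :: "nat \<Rightarrow> 'v"
  show "wedge 1 p (one_form (\<xi> k)) \<mu> w = 0" using fb_wedge[OF fb k] by simp
qed (use z in auto)

lemma S3:
  assumes sp: "s \<le> p" and D0: "D0 \<subseteq> D"
    and cz: "\<And>d. (\<forall>i<p - s. d i \<in> D0) \<Longrightarrow> \<mu> (catv s e d) = 0"
    and v: "\<forall>i<p. v i \<in> span (e ` {..<s} \<union> D0)"
  shows "\<mu> v = 0"
proof (rule form_agree[OF fm zero_form sp inj_e _ _ v])
  fix v k assume vB: "\<forall>i<p. v i \<in> e ` {..<s} \<union> D0" and k: "k < s" and nm: "\<forall>i<p. v i \<noteq> e k"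
  show "\<mu> v = 0"
  proof (rule S1[OF k])
    fix i assume i: "i < p"
    show "\<xi> k (v i) = 0"
    proof (cases "v i \<in> D0")
      case True then show ?thesis using D0 k unfolding Deq by auto
    next
      case False
      then obtain j where "j < s" "v i = e j" using vB i by auto
      then show ?thesis using dual k nm i by auto
    qed
  qed
next
  fix v assume ve: "\<forall>i<s. v i = e i" and vD: "\<forall>i. s \<le> i \<and> i < p \<longrightarrow> v i \<in> D0"
  have "\<mu> v = \<mu> (catv s e (\<lambda>j. v (s + j)))"
    by (rule form_dep[OF fm]) (use ve in \<open>auto simp: catv_def\<close>)
  also have "\<dots> = 0" by (rule cz) (use vD in auto)
  finally show "\<mu> v = 0" .
qed

lemma mu_ex: "\<exists>v. \<mu> v \<noteq> 0" using nz by auto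

lemma S3D:
  assumes sp: "s \<le> p"
    and cz: "\<And>d. (\<forall>i<p - s. d i \<in> D) \<Longrightarrow> \<mu> (catv s e d) = 0"
  shows False
proof -
  have "\<mu> v = 0" for v by (rule S3[OF sp subset_refl cz]) (use spanD in auto)
  then show False using mu_ex by auto
qed

lemma s_le_p: "s \<le> p"
proof (rule ccontr)
  assume ps: "\<not> s \<le> p"
  have "\<mu> v = 0" for v
  proof (rule form_span_ext[OF fm zero_form, of "e ` {..<s} \<union> D"])
    fix v assume vB: "\<forall>i<p. v i \<in> e ` {..<s} \<union> D"
    have "\<exists>k<s. \<forall>i<p. v i \<noteq> e k"
    proof (rule ccontr)
      assume "\<not> (\<exists>k<s. \<forall>i<p. v i \<noteq> e k)"
      then have "e ` {..<s} \<subseteq> v ` {..<p}"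
      proof (intro subsetI, elim imageE)
        fix x k assume h: "\<not> (\<exists>k<s. \<forall>i<p. v i \<noteq> e k)" "x = e k" "k \<in> {..<s}"
        then obtain i where "i < p" "v i = e k" by auto
        then show "x \<in> v ` {..<p}" using h(2) by (intro image_eqI[of _ _ i]) auto
      qed
      then have "card (e ` {..<s}) \<le> card (v ` {..<p})" by (intro card_mono) auto
      also have "\<dots> \<le> p" using card_image_le[of "{..<p}" v] by simp
      finally show False using card_image[OF inj_e] ps by simp
    qed
    then obtain k where k: "k < s" "\<forall>i<p. v i \<noteq> e k" by auto
    show "\<mu> v = 0"
    proof (rule S1[OF k(1)])
      fix i assume i: "i < p"
      show "\<xi> k (v i) = 0"
      proof (cases "v i \<in> D")
        case True then show ?thesis using k unfolding Deq by auto
      next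
        case False
        then obtain j where "j < s" "v i = e j" using vB i by auto
        then show ?thesis using dual k i by auto
      qed
    qed
  qed (use spanD in auto)
  then show False using mu_ex by auto
qed

lemma dual_cat: "k < s \<Longrightarrow> i < p \<Longrightarrow> (\<forall>j<p - s. d j \<in> D) \<Longrightarrow> \<xi> k (catv s e d i) = (if i = k then 1 else 0)"
  using dual s_le_p unfolding Deq by (auto simp: catv_def)

lemma zeta_D:
  assumes zf: "is_form (p - s) \<zeta>" and eq: "\<mu> = wedge s (p - s) (wedge_list s \<xi>) \<zeta>"
    and d: "\<forall>j<p - s. d j \<in> D"
  shows "\<zeta> d = \<mu> (catv s e d)"
proof -
  have "wedge s (p - s) (wedge_list s \<xi>) \<zeta> (catv s e d) = \<zeta> (\<lambda>j. catv s e d (s + j))"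
    by (rule wedge_eval[OF lin zf]) (use dual_cat[OF _ _ d] s_le_p in auto)
  then show ?thesis using eq by (simp add: catv_def)
qed

lemma core:
  assumes bq: "is_form (p - s) \<beta>"
    and bD: "\<And>d. (\<forall>i<p - s. d i \<in> D) \<Longrightarrow> \<beta> d = \<mu> (catv s e d)"
    and lineta: "linear (\<eta> :: 'v \<Rightarrow> real)" and yD: "y \<in> D" and y1: "\<eta> y = 1"
    and bz: "\<And>d. (\<forall>i<p - s. d i \<in> D \<and> \<eta> (d i) = 0) \<Longrightarrow> \<beta> d = 0"
  shows False
proof -
  define \<eta>' where "\<eta>' x = \<eta> x - (\<Sum>k<s. \<eta> (e k) * \<xi> k x)" for x
  have lin': "linear \<eta>'" unfolding \<eta>'_def
    by (intro linear_compose_sub lineta linear_compose_sum ballI lin_cmul lin) auto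
  have y0: "\<xi> k y = 0" if "k < s" for k using yD that unfolding Deq by auto
  have y1': "\<eta>' y = 1" unfolding \<eta>'_def using y0 y1 by simp
  let ?D0 = "D \<inter> {x. \<eta> x = 0}"
  have van: "\<mu> v = 0" if v: "\<forall>i<p. \<eta>' (v i) = 0" for v
  proof (rule S3[OF s_le_p, of ?D0])
    fix d assume d: "\<forall>i<p - s. d i \<in> ?D0"
    have "\<mu> (catv s e d) = \<beta> d" using bD d by auto
    also have "\<dots> = 0" using bz d by auto
    finally show "\<mu> (catv s e d) = 0" .
  next
    show "\<forall>i<p. v i \<in> span (e ` {..<s} \<union> ?D0)"
    proof (intro allI impI)
      fix i assume i: "i < p"
      define x where "x = v i"
      define d where "d = x - (\<Sum>k<s. \<xi> k x *\<^sub>R e k)"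
      have dD: "d \<in> D" unfolding d_def Deq by (rule span_ED(1)[OF lin dual])
      have "\<eta> d = \<eta> x - (\<Sum>k<s. \<xi> k x * \<eta> (e k))"
        unfolding d_def using lineta lin_sum_scale[OF lineta, of "\<lambda>k. \<xi> k x" e "{..<s}"] by (simp add: linear_diff)
      also have "\<dots> = \<eta>' x" unfolding \<eta>'_def by (simp add: mult.commute)
      also have "\<dots> = 0" using v i x_def by simp
      finally have dD0: "d \<in> ?D0" using dD by simp
      have "(\<Sum>k<s. \<xi> k x *\<^sub>R e k) \<in> span (e ` {..<s} \<union> ?D0)"
        by (intro span_sum span_mul span_base) auto
      moreover have "d \<in> span (e ` {..<s} \<union> ?D0)" using dD0 by (intro span_base) auto
      ultimately have "(\<Sum>k<s. \<xi> k x *\<^sub>R e k) + d \<in> span (e ` {..<s} \<union> ?D0)" by (rule span_add)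
      then show "v i \<in> span (e ` {..<s} \<union> ?D0)" unfolding d_def x_def by simp
    qed
  qed auto
  have "wedge 1 p (one_form \<eta>') \<mu> = (\<lambda>v. 0)" by (rule conv_div[OF lin' y1' fm van]) auto
  then have "\<eta>' \<in> div_polar p \<mu>" using lin' unfolding div_polar_def by simp
  then obtain c where "\<forall>x. \<eta>' x = (\<Sum>i<s. c i * \<xi> i x)" using fb unfolding fun_basis_of_def by blast
  then have "\<eta>' y = 0" using y0 by simp
  then show False using y1' by simp
qed

end

lemma form_cmul: "is_form p f \<Longrightarrow> is_form p (\<lambda>v. c * f v)"
  unfolding is_form_def by (auto intro: lin_cmul)

lemma indiv_D_closed: "x \<in> {x. \<forall>k<s. \<xi> k x = 0} \<Longrightarrow> (\<And>k. k < s \<Longrightarrow> linear (\<xi> k)) \<Longrightarrow> c *\<^sub>R x \<in> {x. \<forall>k<s. \<xi> k x = 0}"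
  by (auto simp: linear_scale)

context sett
begin

lemma part_d:
  assumes zf: "is_form (p - s) \<zeta>" and eq: "\<mu> = wedge s (p - s) (wedge_list s \<xi>) \<zeta>"
  shows "indivisible_in D (p - s) \<zeta>"
  unfolding indivisible_in_def
proof (intro set_eqI iffI)
  fix x assume "x \<in> div_space D (p - s) \<zeta>"
  then show "x \<in> D" unfolding div_space_def by simp
next
  fix x assume xD: "x \<in> D"
  show "x \<in> div_space D (p - s) \<zeta>"
    unfolding div_space_def[of D]
  proof (intro CollectI conjI allI impI xD)
    fix \<eta> :: "'v \<Rightarrow> real"
    assume h: "linear \<eta> \<and> (\<forall>v. (\<forall>i<p - s + 1. v i \<in> D) \<longrightarrow> wedge 1 (p - s) (one_form \<eta>) \<zeta> v = 0)"
    show "\<eta> x = 0"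
    proof (rule ccontr)
      assume nx: "\<eta> x \<noteq> 0"
      define y where "y = (1 / \<eta> x) *\<^sub>R x"
      have y1: "\<eta> y = 1" using h nx unfolding y_def by (simp add: linear_scale)
      have yD: "y \<in> D" using xD lin unfolding Deq y_def by (auto simp: linear_scale)
      have bD: "\<zeta> d = \<mu> (catv s e d)" if "\<forall>i<p - s. d i \<in> D" for d
        by (rule zeta_D[OF zf eq that])
      have le: "linear \<eta>" using h by simp
      have bz: "\<zeta> d = 0" if d: "\<forall>i<p - s. d i \<in> D \<and> \<eta> (d i) = 0" for d
        by (rule div_vanish[of \<eta> "p - s" \<zeta> y D]) (use h zf y1 yD d in auto)
      show False by (rule core[OF zf bD le yD y1 bz])
    qed
  qed
qed

lemma part_c:
  assumes s2: "sett p \<mu> s \<xi>' e'"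
    and zf: "is_form (p - s) \<zeta>" and eq: "\<mu> = wedge s (p - s) (wedge_list s \<xi>) \<zeta>"
    and zf': "is_form (p - s) \<zeta>'" and eq': "\<mu> = wedge s (p - s) (wedge_list s \<xi>') \<zeta>'"
  shows "\<exists>c. c \<noteq> 0 \<and> (\<forall>v. (\<forall>i<p - s. v i \<in> D) \<longrightarrow> \<zeta>' v = c * \<zeta> v)"
proof -
  interpret s2: sett p \<mu> s \<xi>' e' by (rule s2)
  define c where "c = wedge_list s \<xi> e'"
  have key: "\<mu> (catv s e' d) = c * \<mu> (catv s e d)" if d: "\<forall>i<p - s. d i \<in> D" for d
  proof -
    have fg: "is_form s (\<lambda>x. \<mu> (catv s x d))" by (rule catv_form2[OF fm s_le_p])
    have fh: "is_form s (\<lambda>x. \<mu> (catv s e d) * wedge_list s \<xi> x)"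
      by (rule form_cmul[OF wedge_list_form[OF lin]])
    have "(\<lambda>x. \<mu> (catv s x d)) e' = (\<lambda>x. \<mu> (catv s e d) * wedge_list s \<xi> x) e'"
    proof (rule form_agree[OF fg fh le_refl inj_e, of D])
      fix x k assume xB: "\<forall>i<s. x i \<in> e ` {..<s} \<union> D" and k: "k < s" and nm: "\<forall>i<s. x i \<noteq> e k"
      have z: "\<xi> k (x i) = 0" if i: "i < s" for i
      proof (cases "x i \<in> D")
        case True then show ?thesis using k unfolding Deq by auto
      next
        case False
        then obtain j where "j < s" "x i = e j" using xB i by auto
        then show ?thesis using dual k nm i by auto
      qed
      have "\<mu> (catv s x d) = 0"
      proof (rule S1[OF k])
        fix i assume "i < p"
        then show "\<xi> k (catv s x d i) = 0"
          using z d k unfolding Deq catv_def by auto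
      qed
      moreover have "wedge_list s \<xi> x = 0" by (rule wedge_list_zero_row[where \<xi>=\<xi> and v=x, OF k z])
      ultimately show "\<mu> (catv s x d) = \<mu> (catv s e d) * wedge_list s \<xi> x" by simp
    next
      fix x assume xe: "\<forall>i<s. x i = e i"
      have "catv s x d = catv s e d" using xe by (auto simp: catv_def fun_eq_iff)
      moreover have "wedge_list s \<xi> x = 1"
      proof -
        have "wedge_list s \<xi> x = (\<Prod>k<s. \<xi> k (x k))"
          by (rule wedge_list_diag) (use xe dual in auto)
        also have "\<dots> = 1" using xe dual by (intro prod.neutral) auto
        finally show ?thesis .
      qed
      ultimately show "\<mu> (catv s x d) = \<mu> (catv s e d) * wedge_list s \<xi> x" by simp
    qed (use spanD in auto)
    then show ?thesis unfolding c_def by simp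
  qed
  have Deq': "s2.D = D" by simp
  have c0: "c \<noteq> 0"
  proof
    assume c: "c = 0"
    show False
    proof (rule s2.S3D[OF s2.s_le_p])
      fix d assume "\<forall>i<p - s. d i \<in> D"
      then show "\<mu> (catv s e' d) = 0" using key c by simp
    qed
  qed
  show ?thesis
  proof (intro exI conjI allI impI)
    show "c \<noteq> 0" by (rule c0)
  next
    fix v assume v: "\<forall>i<p - s. v i \<in> D"
    have "\<zeta>' v = \<mu> (catv s e' v)" by (rule s2.zeta_D[OF zf' eq']) (use v in simp)
    also have "\<dots> = c * \<mu> (catv s e v)" by (rule key[OF v])
    also have "\<mu> (catv s e v) = \<zeta> v" by (rule zeta_D[OF zf eq v, symmetric])
    finally show "\<zeta>' v = c * \<zeta> v" .
  qed
qed

lemma dec_imp: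
  assumes dec: "decomposable p \<mu>"
  shows "s = p"
proof (rule ccontr)
  assume sp: "s \<noteq> p"
  then have slp: "s < p" using s_le_p by simp
  from dec obtain c \<xi>d where lind: "\<forall>i<p. linear (\<xi>d i)" and mu: "\<mu> = (\<lambda>v. c * wedge_list p \<xi>d v)"
    unfolding decomposable_def by blast
  have inD': "\<xi>d k \<in> div_polar p \<mu>" if k: "k < p" for k
  proof -
    have "\<exists>y. \<xi>d k y \<noteq> 0"
    proof (rule ccontr)
      assume "\<not> (\<exists>y. \<xi>d k y \<noteq> 0)"
      then have "\<mu> v = 0" for v unfolding mu using wedge_list_zero_row[OF k, of \<xi>d v] by simp
      then show False using mu_ex by auto
    qed
    then obtain y0 where y0: "\<xi>d k y0 \<noteq> 0" by auto
    define y where "y = (1 / \<xi>d k y0) *\<^sub>R y0"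
    have y1: "\<xi>d k y = 1" using lind k y0 unfolding y_def by (simp add: linear_scale)
    have "wedge 1 p (one_form (\<xi>d k)) \<mu> = (\<lambda>v. 0)"
    proof (rule conv_div[where \<eta>="\<xi>d k", OF _ y1 fm])
      show "linear (\<xi>d k)" using lind k by simp
      fix v assume "\<forall>i<p. \<xi>d k (v i) = 0"
      then show "\<mu> v = 0" unfolding mu using wedge_list_zero_row[OF k, of \<xi>d v] by simp
    qed
    then show ?thesis using lind k unfolding div_polar_def by simp
  qed
  show False
  proof (rule S3D[OF s_le_p])
    fix d assume d: "\<forall>i<p - s. d i \<in> D"
    have "wedge_list p \<xi>d (catv s e d) = 0"
    proof (rule wedge_list_zero_col[OF slp])
      fix k assume k: "k < p"
      have "catv s e d s = d 0" by (simp add: catv_def)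
      moreover have "d 0 \<in> D" using d slp by simp
      ultimately show "\<xi>d k (catv s e d s) = 0" using inD'[OF k] unfolding D_char by auto
    qed
    then show "\<mu> (catv s e d) = 0" unfolding mu by simp
  qed
qed

lemma p_imp_dec:
  assumes sp: "s = p"
  shows "decomposable p \<mu>"
proof -
  have fh: "is_form p (\<lambda>v. \<mu> e * wedge_list p \<xi> v)"
    by (rule form_cmul[OF wedge_list_form]) (use lin sp in auto)
  have "\<mu> v = \<mu> e * wedge_list p \<xi> v" for v
  proof (rule form_agree[OF fm fh _ inj_e, of D])
    show "s \<le> p" using sp by simp
  next
    fix v k assume vB: "\<forall>i<p. v i \<in> e ` {..<s} \<union> D" and k: "k < s" and nm: "\<forall>i<p. v i \<noteq> e k"
    have z: "\<xi> k (v i) = 0" if i: "i < p" for i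
    proof (cases "v i \<in> D")
      case True then show ?thesis using k unfolding Deq by auto
    next
      case False
      then obtain j where "j < s" "v i = e j" using vB i by auto
      then show ?thesis using dual k nm i by auto
    qed
    have "\<mu> v = 0" by (rule S1[OF k z])
    moreover have "wedge_list p \<xi> v = 0" by (rule wedge_list_zero_row[of k]) (use k sp z in auto)
    ultimately show "\<mu> v = \<mu> e * wedge_list p \<xi> v" by simp
  next
    fix v assume ve: "\<forall>i<s. v i = e i"
    have "\<mu> v = \<mu> e" by (rule form_dep[OF fm]) (use ve sp in auto)
    moreover have "wedge_list p \<xi> v = 1"
    proof -
      have "wedge_list p \<xi> v = (\<Prod>k<p. \<xi> k (v k))"
        by (rule wedge_list_diag) (use ve dual sp in auto)
      also have "\<dots> = 1" using ve dual sp by (intro prod.neutral) auto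
      finally show ?thesis .
    qed
    ultimately show "\<mu> v = \<mu> e * wedge_list p \<xi> v" by simp
  qed (use spanD in auto)
  then have "\<mu> = (\<lambda>v. \<mu> e * wedge_list p \<xi> v)" by (rule ext)
  then show ?thesis unfolding decomposable_def using lin sp by blast
qed

lemma pm1_imp_dec:
  assumes sp: "p = Suc s"
  shows "decomposable p \<mu>"
proof -
  define \<eta> where "\<eta> x = \<mu> (catv s e (\<lambda>_. x))" for x
  have cf: "is_form 1 (\<lambda>d. \<mu> (catv s e d))" using catv_form[OF fm s_le_p, of e] sp by simp
  have linEta: "linear \<eta>"
  proof -
    have "linear (\<lambda>x. \<mu> (catv s e ((\<lambda>_. 0)(0 := x))))" using form_lin[OF cf, of 0] by simp
    moreover have "\<mu> (catv s e ((\<lambda>_. 0)(0 := x))) = \<eta> x" for x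
      unfolding \<eta>_def by (rule form_dep[OF cf]) simp
    ultimately show ?thesis by simp
  qed
  define \<xi>2 where "\<xi>2 = \<xi>(s := \<eta>)"
  have lin2: "k < p \<Longrightarrow> linear (\<xi>2 k)" for k using lin linEta sp unfolding \<xi>2_def by (cases "k = s") auto
  have fh: "is_form p (wedge_list p \<xi>2)" by (rule wedge_list_form[OF lin2])
  have "\<mu> v = wedge_list p \<xi>2 v" for v
  proof (rule form_agree[OF fm fh _ inj_e, of D])
    show "s \<le> p" using sp by simp
  next
    fix v k assume vB: "\<forall>i<p. v i \<in> e ` {..<s} \<union> D" and k: "k < s" and nm: "\<forall>i<p. v i \<noteq> e k"
    have z: "\<xi> k (v i) = 0" if i: "i < p" for i
    proof (cases "v i \<in> D")
      case True then show ?thesis using k unfolding Deq by auto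
    next
      case False
      then obtain j where "j < s" "v i = e j" using vB i by auto
      then show ?thesis using dual k nm i by auto
    qed
    have "\<mu> v = 0" by (rule S1[OF k z])
    moreover have "wedge_list p \<xi>2 v = 0"
      by (rule wedge_list_zero_row[of k]) (use k sp z in \<open>auto simp: \<xi>2_def\<close>)
    ultimately show "\<mu> v = wedge_list p \<xi>2 v" by simp
  next
    fix v assume ve: "\<forall>i<s. v i = e i" and vD: "\<forall>i. s \<le> i \<and> i < p \<longrightarrow> v i \<in> D"
    have vs: "v s \<in> D" using vD sp by simp
    have etae: "\<eta> (e i) = 0" if "i < s" for i
      unfolding \<eta>_def by (rule form_alt[OF fm, of i s]) (use that sp in \<open>auto simp: catv_def\<close>)
    have "wedge_list p \<xi>2 v = (\<Prod>k<p. \<xi>2 k (v k))"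
    proof (rule wedge_list_diag)
      fix k i assume ki: "k < p" "i < p" "i \<noteq> k"
      show "\<xi>2 k (v i) = 0"
      proof (cases "k = s")
        case True
        then have "i < s" using ki sp by simp
        then show ?thesis using True etae ve by (simp add: \<xi>2_def)
      next
        case False
        then have ks: "k < s" using ki sp by simp
        show ?thesis
        proof (cases "i = s")
          case True then show ?thesis using vs ks False unfolding Deq \<xi>2_def by auto
        next
          case False
          then have "i < s" using ki sp by simp
          then show ?thesis using ve dual ks ki \<open>k \<noteq> s\<close> by (simp add: \<xi>2_def)
        qed
      qed
    qed
    also have "\<dots> = (\<Prod>k<s. \<xi>2 k (v k)) * \<xi>2 s (v s)" using sp by simp
    also have "(\<Prod>k<s. \<xi>2 k (v k)) = 1" using ve dual by (intro prod.neutral) (auto simp: \<xi>2_def)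
    also have "\<xi>2 s (v s) = \<mu> v"
      unfolding \<xi>2_def \<eta>_def by simp (rule form_dep[OF fm], use ve sp in \<open>auto simp: catv_def less_Suc_eq\<close>)
    finally show "\<mu> v = wedge_list p \<xi>2 v" by simp
  qed (use spanD in auto)
  then have "\<mu> = (\<lambda>v. 1 * wedge_list p \<xi>2 v)" by (simp add: fun_eq_iff)
  then show ?thesis unfolding decomposable_def using lin2 by blast
qed

end

lemma form_sum:
  fixes G :: "'f \<Rightarrow> (nat \<Rightarrow> 'a::real_vector) \<Rightarrow> real"
  assumes fin: "finite F" and fs: "\<And>f. f \<in> F \<Longrightarrow> is_form q (G f)"
  shows "is_form q (\<lambda>v. \<Sum>f\<in>F. c f * G f v)"
  unfolding is_form_def
proof (intro conjI allI impI)
  fix v w :: "nat \<Rightarrow> 'a" assume "\<forall>i<q. v i = w i"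
  then show "(\<Sum>f\<in>F. c f * G f v) = (\<Sum>f\<in>F. c f * G f w)"
    using fs by (intro sum.cong refl) (metis form_dep)
next
  fix i v assume i: "i < q"
  show "linear (\<lambda>x. \<Sum>f\<in>F. c f * G f (v(i := x)))"
    by (intro linear_compose_sum ballI lin_cmul form_lin[OF fs i])
next
  fix v :: "nat \<Rightarrow> 'a" and i j assume h: "i < q \<and> j < q \<and> i \<noteq> j \<and> v i = v j"
  show "(\<Sum>f\<in>F. c f * G f v) = 0"
    using fs h by (intro sum.neutral ballI) (metis form_alt mult_zero_right)
qed

lemma prod_ind:
  "finite A \<Longrightarrow> (\<Prod>k\<in>A. if P k then (1::real) else 0) = (if \<forall>k\<in>A. P k then 1 else 0)"
  by (induction A rule: finite_induct) auto

context sett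
begin

lemma full_span:
  assumes fbn: "fun_basis_of n \<xi> {\<eta>. linear \<eta>}"
    and dualn: "\<And>k j. k < n \<Longrightarrow> j < n \<Longrightarrow> \<xi> k (e j) = (if k = j then 1 else 0)"
  shows "x \<in> span (e ` {..<n})"
proof -
  have linn: "k < n \<Longrightarrow> linear (\<xi> k)" for k using fbn unfolding fun_basis_of_def by auto
  define y where "y = x - (\<Sum>k<n. \<xi> k x *\<^sub>R e k)"
  have yk: "\<forall>k<n. \<xi> k y = 0" using span_ED(1)[OF linn dualn] unfolding y_def by auto
  have "(\<lambda>z. y \<bullet> z) \<in> {\<eta>. linear \<eta>}" by (simp add: lin_inner)
  then obtain c where "\<forall>z. y \<bullet> z = (\<Sum>i<n. c i * \<xi> i z)" using fbn unfolding fun_basis_of_def by blast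
  then have "y \<bullet> y = 0" using yk by simp
  then have "y = 0" by simp
  then have "x = (\<Sum>k<n. \<xi> k x *\<^sub>R e k)" unfolding y_def by simp
  also have "\<dots> \<in> span (e ` {..<n})" by (intro span_sum span_mul span_base) auto
  finally show ?thesis .
qed

lemma part_b:
  assumes fbn: "fun_basis_of n \<xi> {\<eta>. linear \<eta>}"
    and dualn: "\<And>k j. k < n \<Longrightarrow> j < n \<Longrightarrow> \<xi> k (e j) = (if k = j then 1 else 0)"
    and sn: "s \<le> n"
  shows "\<exists>\<zeta>. is_form (p - s) \<zeta> \<and> \<mu> = wedge s (p - s) (wedge_list s \<xi>) \<zeta> \<and>
                indivisible_in UNIV (p - s) \<zeta> \<and>
                (\<exists>(m::nat) c g. (\<forall>j<m. \<forall>k<p - s. s \<le> g j k \<and> g j k < n) \<and>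
                   \<zeta> = (\<lambda>v. \<Sum>j<m. c j * wedge_list (p - s) (\<lambda>k. \<xi> (g j k)) v))"
proof -
  define q where "q = p - s"
  have pq: "p = s + q" unfolding q_def using s_le_p by simp
  have linn: "k < n \<Longrightarrow> linear (\<xi> k)" for k using fbn unfolding fun_basis_of_def by auto
  define F where "F = PiE {..<q} (\<lambda>_. {s..<n})"
  have finF: "finite F" unfolding F_def by (intro finite_PiE) auto
  define z0 where "z0 d = \<mu> (catv s e d)" for d
  have z0f: "is_form q z0" unfolding z0_def q_def by (rule catv_form[OF fm s_le_p])
  define \<zeta> where "\<zeta> v = (\<Sum>f\<in>F. (z0 (e \<circ> f) / fact q) * wedge_list q (\<lambda>k. \<xi> (f k)) v)" for v
  have zf: "is_form q \<zeta>"
    unfolding \<zeta>_def[abs_def]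
  proof (rule form_sum[OF finF])
    fix f assume f: "f \<in> F"
    show "is_form q (wedge_list q (\<lambda>k. \<xi> (f k)))"
      by (rule wedge_list_form) (use f linn in \<open>auto simp: F_def PiE_iff\<close>)
  qed
  let ?P = "{\<tau>. \<tau> permutes {..<q}}"
  have zg: "\<zeta> (e \<circ> g) = z0 (e \<circ> g)" if g: "\<And>i. i < q \<Longrightarrow> s \<le> g i \<and> g i < n" for g
  proof -
    have wl: "wedge_list q (\<lambda>k. \<xi> (f k)) (e \<circ> g) =
              (\<Sum>\<tau>\<in>?P. of_int (sign \<tau>) * (if \<forall>k\<in>{..<q}. f k = g (\<tau> k) then 1 else 0))" if f: "f \<in> F" for f
      unfolding wedge_list_def
    proof (intro sum.cong refl arg_cong2[where f="(*)"])
      fix \<tau> assume "\<tau> \<in> ?P"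
      then have tau: "\<tau> permutes {..<q}" by simp
      have "(\<Prod>k<q. \<xi> (f k) ((e \<circ> g) (\<tau> k))) = (\<Prod>k<q. if f k = g (\<tau> k) then 1 else 0)"
      proof (intro prod.cong refl)
        fix k assume "k \<in> {..<q}"
        then have "f k < n" "g (\<tau> k) < n" using f g perm_lt[OF tau] by (auto simp: F_def PiE_iff)
        then show "\<xi> (f k) ((e \<circ> g) (\<tau> k)) = (if f k = g (\<tau> k) then 1 else 0)" using dualn by simp
      qed
      also have "\<dots> = (if \<forall>k\<in>{..<q}. f k = g (\<tau> k) then 1 else 0)" by (rule prod_ind) simp
      finally show "(\<Prod>k<q. \<xi> (f k) ((e \<circ> g) (\<tau> k))) = (if \<forall>k\<in>{..<q}. f k = g (\<tau> k) then 1 else 0)" .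
    qed
    have inner: "(\<Sum>f\<in>F. z0 (e \<circ> f) * (if \<forall>k\<in>{..<q}. f k = g (\<tau> k) then 1 else 0)) = of_int (sign \<tau>) * z0 (e \<circ> g)"
      if tau: "\<tau> permutes {..<q}" for \<tau>
    proof -
      define f0 where "f0 = restrict (\<lambda>k. g (\<tau> k)) {..<q}"
      have f0F: "f0 \<in> F" unfolding f0_def F_def using g perm_lt[OF tau] by auto
      have iff: "(\<forall>k\<in>{..<q}. f k = g (\<tau> k)) \<longleftrightarrow> f = f0" if "f \<in> F" for f
        using that unfolding f0_def F_def by (auto simp: PiE_iff fun_eq_iff extensional_def)
      have "(\<Sum>f\<in>F. z0 (e \<circ> f) * (if \<forall>k\<in>{..<q}. f k = g (\<tau> k) then 1 else 0)) =
            (\<Sum>f\<in>F. if f = f0 then z0 (e \<circ> f) else 0)"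
        using iff by (intro sum.cong refl) auto
      also have "\<dots> = z0 (e \<circ> f0)" using finF f0F by simp
      also have "\<dots> = z0 ((e \<circ> g) \<circ> \<tau>)" by (rule form_dep[OF z0f]) (simp add: f0_def)
      also have "\<dots> = of_int (sign \<tau>) * z0 (e \<circ> g)" by (rule form_perm[OF z0f tau])
      finally show ?thesis .
    qed
    have "\<zeta> (e \<circ> g) = (\<Sum>f\<in>F. (z0 (e \<circ> f) / fact q) *
            (\<Sum>\<tau>\<in>?P. of_int (sign \<tau>) * (if \<forall>k\<in>{..<q}. f k = g (\<tau> k) then 1 else 0)))"
      unfolding \<zeta>_def using wl by (intro sum.cong refl) auto
    also have "\<dots> = (\<Sum>\<tau>\<in>?P. (of_int (sign \<tau>) / fact q) *
            (\<Sum>f\<in>F. z0 (e \<circ> f) * (if \<forall>k\<in>{..<q}. f k = g (\<tau> k) then 1 else 0)))"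
      by (simp add: sum_distrib_left sum_distrib_right sum.swap[of _ F] algebra_simps)
    also have "\<dots> = (\<Sum>\<tau>\<in>?P. z0 (e \<circ> g) / fact q)"
    proof (intro sum.cong refl)
      fix \<tau> assume "\<tau> \<in> ?P"
      then have tau: "\<tau> permutes {..<q}" by simp
      show "(of_int (sign \<tau>) / fact q) * (\<Sum>f\<in>F. z0 (e \<circ> f) * (if \<forall>k\<in>{..<q}. f k = g (\<tau> k) then 1 else 0)) =
            z0 (e \<circ> g) / fact q"
        unfolding inner[OF tau] using sign_sq_real[of \<tau>]
        by (simp add: field_simps)
    qed
    also have "\<dots> = z0 (e \<circ> g)" by (simp add: card_permutations)
    finally show ?thesis .
  qed
  have spn: "x \<in> span (e ` {..<s} \<union> e ` {s..<n})" for x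
  proof -
    have "{..<n} = {..<s} \<union> {s..<n}" using sn by auto
    then have "e ` {..<n} = e ` {..<s} \<union> e ` {s..<n}" by (simp add: image_Un)
    then show ?thesis using full_span[OF fbn dualn, of x] by simp
  qed
  have wf: "is_form p (wedge s q (wedge_list s \<xi>) \<zeta>)"
    unfolding pq by (rule wedge_form[OF wedge_list_form[OF lin] zf])
  have eqv: "\<mu> v = wedge s q (wedge_list s \<xi>) \<zeta> v" for v
  proof (rule form_agree[OF fm wf s_le_p inj_e, of "e ` {s..<n}"])
    fix v k assume vB: "\<forall>i<p. v i \<in> e ` {..<s} \<union> e ` {s..<n}" and k: "k < s" and nm: "\<forall>i<p. v i \<noteq> e k"
    have z: "\<xi> k (v i) = 0" if i: "i < p" for i
    proof -
      have "v i \<in> e ` {..<s} \<union> e ` {s..<n}" using vB i by blast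
      then have "\<exists>j<n. v i = e j"
      proof
        assume "v i \<in> e ` {..<s}"
        then obtain j where "j < s" "v i = e j" by auto
        then show ?thesis using sn by (intro exI[of _ j]) auto
      next
        assume "v i \<in> e ` {s..<n}"
        then obtain j where "j < n" "v i = e j" by auto
        then show ?thesis by blast
      qed
      then obtain j where j: "j < n" "v i = e j" by blast
      then show ?thesis using dualn[of k j] k sn nm i by auto
    qed
    have "\<mu> v = 0" by (rule S1[OF k z])
    moreover have "wedge s q (wedge_list s \<xi>) \<zeta> v = 0"
      by (rule wedge_zero_row[OF k]) (use z pq in auto)
    ultimately show "\<mu> v = wedge s q (wedge_list s \<xi>) \<zeta> v" by simp
  next
    fix v assume ve: "\<forall>i<s. v i = e i" and vD: "\<forall>i. s \<le> i \<and> i < p \<longrightarrow> v i \<in> e ` {s..<n}"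
    define g where "g i = (SOME j. j \<in> {s..<n} \<and> v (s + i) = e j)" for i
    have g: "s \<le> g i \<and> g i < n \<and> v (s + i) = e (g i)" if i: "i < q" for i
    proof -
      have "v (s + i) \<in> e ` {s..<n}" using vD i pq by auto
      then have "\<exists>j. j \<in> {s..<n} \<and> v (s + i) = e j" by (auto simp: image_iff)
      from someI_ex[OF this] show ?thesis unfolding g_def by auto
    qed
    have "\<mu> v = z0 (\<lambda>j. v (s + j))"
      unfolding z0_def by (rule form_dep[OF fm]) (use ve in \<open>auto simp: catv_def\<close>)
    also have "\<dots> = z0 (e \<circ> g)" by (rule form_dep[OF z0f]) (use g in auto)
    also have "\<dots> = \<zeta> (e \<circ> g)" using zg g by auto
    also have "\<dots> = \<zeta> (\<lambda>j. v (s + j))" by (rule form_dep[OF zf]) (use g in auto)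
    also have "\<dots> = wedge s q (wedge_list s \<xi>) \<zeta> v"
    proof (rule wedge_eval[OF lin zf, symmetric])
      fix k i assume k: "k < s" and i: "i < s + q"
      show "\<xi> k (v i) = (if i = k then 1 else 0)"
      proof (cases "i < s")
        case True then show ?thesis using ve dual k by simp
      next
        case False
        then have "v i \<in> e ` {s..<n}" using vD i pq by auto
        then obtain j where "j \<in> {s..<n}" "v i = e j" by blast
        then show ?thesis using dualn[of k j] k False sn by auto
      qed
    qed
    finally show "\<mu> v = wedge s q (wedge_list s \<xi>) \<zeta> v" .
  qed (use spn in auto)
  then have eq: "\<mu> = wedge s q (wedge_list s \<xi>) \<zeta>" by (rule ext)
  have zf': "is_form (p - s) \<zeta>" using zf q_def by simp
  have eq': "\<mu> = wedge s (p - s) (wedge_list s \<xi>) \<zeta>" using eq q_def by simp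
  have indiv: "indivisible_in UNIV (p - s) \<zeta>"
    unfolding indivisible_in_def
  proof (intro set_eqI iffI)
    fix x :: 'v assume "x \<in> UNIV"
    show "x \<in> div_space UNIV (p - s) \<zeta>"
      unfolding div_space_def[of UNIV]
    proof (intro CollectI conjI allI impI UNIV_I)
      fix \<eta> :: "'v \<Rightarrow> real"
      assume h: "linear \<eta> \<and> (\<forall>v. (\<forall>i<p - s + 1. v i \<in> UNIV) \<longrightarrow> wedge 1 (p - s) (one_form \<eta>) \<zeta> v = 0)"
      have le: "linear \<eta>" using h by simp
      show "\<eta> x = 0"
      proof (rule ccontr)
        assume nx: "\<eta> x \<noteq> 0"
        define y where "y = (1 / \<eta> x) *\<^sub>R x"
        have y1: "\<eta> y = 1" using le nx unfolding y_def by (simp add: linear_scale)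
        have bzU: "\<zeta> d = 0" if d: "\<forall>i<p - s. \<eta> (d i) = 0" for d
          by (rule div_vanish[of \<eta> "p - s" \<zeta> y UNIV]) (use h zf' y1 d in auto)
        have bD: "\<zeta> d = \<mu> (catv s e d)" if "\<forall>i<p - s. d i \<in> D" for d
          by (rule zeta_D[OF zf' eq' that])
        show False
        proof (cases "\<exists>y\<in>D. \<eta> y \<noteq> 0")
          case True
          then obtain y0 where y0: "y0 \<in> D" "\<eta> y0 \<noteq> 0" by auto
          define y' where "y' = (1 / \<eta> y0) *\<^sub>R y0"
          have y'1: "\<eta> y' = 1" using le y0 unfolding y'_def by (simp add: linear_scale)
          have y'D: "y' \<in> D" using y0 lin unfolding Deq y'_def by (auto simp: linear_scale)
          have bz: "\<zeta> d = 0" if d: "\<forall>i<p - s. d i \<in> D \<and> \<eta> (d i) = 0" for d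
            using bzU d by auto
          show False by (rule core[OF zf' bD le y'D y'1 bz])
        next
          case False
          show False
          proof (rule S3D[OF s_le_p])
            fix d assume d: "\<forall>i<p - s. d i \<in> D"
            have "\<zeta> d = 0" using bzU d False by auto
            then show "\<mu> (catv s e d) = 0" using bD[OF d] by simp
          qed
        qed
      qed
    qed
  qed simp
  obtain h where h: "bij_betw h {0..<card F} F" using ex_bij_betw_nat_finite[OF finF] by blast
  have h': "bij_betw h {..<card F} F" using h by (simp add: atLeast0LessThan)
  define c where "c j = z0 (e \<circ> h j) / fact q" for j
  have rep: "\<zeta> = (\<lambda>v. \<Sum>j<card F. c j * wedge_list (p - s) (\<lambda>k. \<xi> (h j k)) v)"
  proof
    fix v
    show "\<zeta> v = (\<Sum>j<card F. c j * wedge_list (p - s) (\<lambda>k. \<xi> (h j k)) v)"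
      unfolding \<zeta>_def c_def q_def
      by (rule sum.reindex_bij_betw[OF h', symmetric])
  qed
  have hr: "\<forall>j<card F. \<forall>k<p - s. s \<le> h j k \<and> h j k < n"
  proof (intro allI impI)
    fix j k assume j: "j < card F" and k: "k < p - s"
    have "h j \<in> F" using h' j by (auto simp: bij_betw_def)
    then show "s \<le> h j k \<and> h j k < n" using k unfolding F_def q_def by (auto simp: PiE_iff)
  qed
  show ?thesis using zf' eq' indiv rep hr by blast
qed

end

lemma Z_pos:
  assumes fm: "is_form p \<mu>" and p: "0 < p" and x: "x \<in> form_kernel p \<mu>" and i: "i < p"
  shows "\<mu> (w(i := x)) = 0"
proof (cases "i = 0")
  case True then show ?thesis using x p unfolding form_kernel_def by simp
next
  case False
  define u where "u = (w(i := x)) \<circ> Transposition.transpose 0 i"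
  have "u 0 = x" unfolding u_def by (simp add: Transposition.transpose_def)
  then have "u = u(0 := x)" by auto
  then have "\<mu> u = 0" using x p unfolding form_kernel_def by (metis (mono_tags, lifting) mem_Collect_eq not_gr0)
  moreover have "\<mu> u = - \<mu> (w(i := x))" unfolding u_def by (rule form_swap[OF fm p i]) (use False in simp)
  ultimately show ?thesis by simp
qed

lemma Z_subspace:
  assumes fm: "is_form p \<mu>" and p: "0 < p"
  shows "subspace (form_kernel p \<mu>)"
  unfolding subspace_def
proof (intro conjI ballI allI)
  show "0 \<in> form_kernel p \<mu>"
    unfolding form_kernel_def using form_scale[OF fm p, of _ 0 0] by simp
next
  fix x y assume x: "x \<in> form_kernel p \<mu>" and y: "y \<in> form_kernel p \<mu>"
  show "x + y \<in> form_kernel p \<mu>"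
    unfolding form_kernel_def using form_add[OF fm p] Z_pos[OF fm p x p] Z_pos[OF fm p y p] by simp
next
  fix c x assume x: "x \<in> form_kernel p \<mu>"
  show "c *\<^sub>R x \<in> form_kernel p \<mu>"
    unfolding form_kernel_def using form_scale[OF fm p] Z_pos[OF fm p x p] by simp
qed

lemma Z_invariance:
  assumes fm: "is_form p \<mu>" and p: "0 < p" and vw: "\<And>i. i < p \<Longrightarrow> v i - w i \<in> form_kernel p \<mu>"
  shows "\<mu> v = \<mu> w"
proof -
  have "\<mu> (\<lambda>i. if i < k then w i else v i) = \<mu> v" if "k \<le> p" for k
    using that
  proof (induction k)
    case 0 then show ?case by simp
  next
    case (Suc k)
    let ?u = "\<lambda>i. if i < k then w i else v i"
    have kp: "k < p" using Suc.prems by simp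
    have eq: "(\<lambda>i. if i < Suc k then w i else v i) = ?u(k := v k + (w k - v k))"
      by (auto simp: fun_eq_iff)
    have "\<mu> (?u(k := v k + (w k - v k))) = \<mu> (?u(k := v k)) + \<mu> (?u(k := w k - v k))"
      by (rule form_add[OF fm kp])
    also have "?u(k := v k) = ?u" by (auto simp: fun_eq_iff)
    also have "\<mu> (?u(k := w k - v k)) = 0"
    proof -
      have "w k - v k \<in> form_kernel p \<mu>"
        using Z_subspace[OF fm p] vw[OF kp] by (metis minus_diff_eq subspace_neg)
      then show ?thesis by (rule Z_pos[OF fm p _ kp])
    qed
    finally have "\<mu> (?u(k := v k + (w k - v k))) = \<mu> ?u" by (simp only: add_0_right)
    then have "\<mu> (\<lambda>i. if i < Suc k then w i else v i) = \<mu> ?u" unfolding eq .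
    with Suc.IH[OF Suc_leD[OF Suc.prems]] show ?case by simp
  qed
  from this[OF le_refl] have "\<mu> (\<lambda>i. if i < p then w i else v i) = \<mu> v" .
  moreover have "\<mu> (\<lambda>i. if i < p then w i else v i) = \<mu> w" by (rule form_dep[OF fm]) simp
  ultimately show ?thesis by simp
qed

lemma rank_part:
  fixes \<mu> :: "(nat \<Rightarrow> 'v::euclidean_space) \<Rightarrow> real"
  assumes fm: "is_form p \<mu>"
  shows "form_rank p \<mu> = DIM('v) - dim (form_kernel p \<mu>)"
proof (cases "p = 0")
  case True
  have Z: "form_kernel p \<mu> = UNIV" using True unfolding form_kernel_def by simp
  have "form_rank p \<mu> = 0" unfolding form_rank_def
  proof (rule Least_eq_0)
    show "\<exists>(W::'v set) (f::'v \<Rightarrow> 'v) \<nu>. subspace W \<and> dim W = 0 \<and> linear f \<and> range f \<subseteq> W \<and> is_form p \<nu> \<and> (\<forall>v. \<mu> v = \<nu> (f \<circ> v))"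
    proof (intro exI conjI)
      show "subspace {0::'v}" by (rule subspace_single_0)
      show "dim {0::'v} = 0" by simp
      show "linear (\<lambda>x::'v. 0::'v)" by (simp add: linear_iff)
      show "range (\<lambda>x::'v. 0::'v) \<subseteq> {0}" by auto
      show "is_form p \<mu>" by (rule fm)
      show "\<forall>v. \<mu> v = \<mu> ((\<lambda>x. 0) \<circ> v)" using form_dep[OF fm] True by auto
    qed
  qed
  then show ?thesis using Z by simp
next
  case False
  then have p: "0 < p" by simp
  let ?Z = "form_kernel p \<mu>"
  have subZ: "subspace ?Z" by (rule Z_subspace[OF fm p])
  define Zp where "Zp = {y. \<forall>x\<in>?Z. orthogonal x y}"
  have subZp: "subspace Zp" unfolding Zp_def by (rule subspace_orthogonal_to_vectors)
  have dimZp: "dim Zp + dim ?Z = DIM('v)"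
    using dim_subspace_orthogonal_to_vectors[OF subZ subspace_UNIV subset_UNIV] unfolding Zp_def by simp
  have lower: "DIM('v) - dim ?Z \<le> d"
    if "\<exists>(W::'v set) (f::'v \<Rightarrow> 'v) \<nu>. subspace W \<and> dim W = d \<and> linear f \<and> range f \<subseteq> W \<and> is_form p \<nu> \<and> (\<forall>v. \<mu> v = \<nu> (f \<circ> v))" for d
  proof -
    from that obtain W :: "'v set" and f :: "'v \<Rightarrow> 'v" and \<nu> :: "(nat \<Rightarrow> 'v) \<Rightarrow> real" where W: "subspace W" "dim W = d" and lf: "linear f" and rf: "range f \<subseteq> W"
      and nf: "is_form p \<nu>" and mv: "\<forall>v. \<mu> v = \<nu> (f \<circ> v)" by auto
    have kerZ: "f x = 0 \<Longrightarrow> x \<in> ?Z" for x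
    proof -
      assume fx: "f x = 0"
      have "\<mu> (w(0 := x)) = 0" for w
      proof -
        have "\<mu> (w(0 := x)) = \<nu> ((f \<circ> w)(0 := 0 *\<^sub>R 0))" using mv fx by (simp add: fun_upd_comp)
        also have "\<dots> = 0 * \<nu> ((f \<circ> w)(0 := 0))" by (rule form_scale[OF nf p])
        also have "\<dots> = 0" by simp
        finally show ?thesis .
      qed
      then show ?thesis unfolding form_kernel_def by simp
    qed
    have inj: "inj_on f (span Zp)"
    proof (rule inj_onI)
      fix x y assume x: "x \<in> span Zp" and y: "y \<in> span Zp" and fxy: "f x = f y"
      have "f (x - y) = 0" using fxy lf by (simp add: linear_diff)
      then have zZ: "x - y \<in> ?Z" by (rule kerZ)
      have spZ: "span Zp = Zp" by (rule span_eq_iff[THEN iffD2, OF subZp])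
      have "x - y \<in> span Zp" by (rule span_diff[OF x y])
      then have "x - y \<in> Zp" using spZ by metis
      then have "orthogonal (x - y) (x - y)" using zZ unfolding Zp_def by blast
      then show "x = y" by (simp add: orthogonal_def)
    qed
    have "dim (f ` Zp) = dim Zp" by (rule dim_image_eq[OF lf inj])
    moreover have "dim (f ` Zp) \<le> dim W" using rf by (intro dim_subset) auto
    ultimately show ?thesis using W dimZp by simp
  qed
  obtain B where B: "B \<subseteq> ?Z" "pairwise orthogonal B" "\<And>x. x \<in> B \<Longrightarrow> norm x = 1"
    "independent B" "card B = dim ?Z" "span B = ?Z"
    using orthonormal_basis_subspace[OF subZ] by blast
  have finB: "finite B" using B(4) by (rule independent_imp_finite)
  have bb: "b \<in> B \<Longrightarrow> b' \<in> B \<Longrightarrow> b \<bullet> b' = (if b = b' then 1 else 0)" for b b'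
    using B(2,3) by (auto simp: pairwise_def orthogonal_def norm_eq_1)
  define P where "P x = (\<Sum>b\<in>B. (x \<bullet> b) *\<^sub>R b)" for x
  define f where "f x = x - P x" for x
  have lf: "linear f" unfolding f_def P_def
    by (simp add: linear_iff inner_add_left scaleR_add_left sum.distrib scaleR_sum_right algebra_simps)
  have fZp: "f x \<in> Zp" for x
  proof -
    have "b' \<bullet> f x = 0" if b': "b' \<in> B" for b'
    proof -
      have "b' \<bullet> P x = (\<Sum>b\<in>B. (x \<bullet> b) * (b' \<bullet> b))" unfolding P_def by (simp add: inner_sum_right)
      also have "\<dots> = (\<Sum>b\<in>B. if b = b' then x \<bullet> b else 0)" using bb b' by (intro sum.cong) auto
      also have "\<dots> = x \<bullet> b'" using finB b' by simp
      finally show ?thesis unfolding f_def by (simp add: inner_diff_right inner_commute)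
    qed
    then have Bs: "B \<subseteq> {z. z \<bullet> f x = 0}" by auto
    have "span B \<subseteq> {z. z \<bullet> f x = 0}" by (rule span_minimal[OF Bs subspace_hyperplane2])
    then show ?thesis unfolding Zp_def B(6)[symmetric] orthogonal_def by auto
  qed
  have xf: "x - f x \<in> ?Z" for x
  proof -
    have "x - f x = P x" unfolding f_def by simp
    also have "P x \<in> span B" unfolding P_def by (intro span_sum span_mul span_base)
    finally show ?thesis using B(6) by simp
  qed
  have wit: "\<exists>(W::'v set) (f::'v \<Rightarrow> 'v) \<nu>. subspace W \<and> dim W = DIM('v) - dim ?Z \<and> linear f \<and> range f \<subseteq> W \<and> is_form p \<nu> \<and> (\<forall>v. \<mu> v = \<nu> (f \<circ> v))"
  proof (intro exI conjI)
    show "subspace Zp" by (rule subZp)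
    show "dim Zp = DIM('v) - dim ?Z" using dimZp by simp
    show "linear f" by (rule lf)
    show "range f \<subseteq> Zp" using fZp by auto
    show "is_form p \<mu>" by (rule fm)
    show "\<forall>v. \<mu> v = \<mu> (f \<circ> v)"
      using Z_invariance[OF fm p] xf by simp
  qed
  show ?thesis unfolding form_rank_def
  proof (rule Least_equality)
    show "\<exists>(W::'v set) (f::'v \<Rightarrow> 'v) \<nu>. subspace W \<and> dim W = DIM('v) - dim ?Z \<and> linear f \<and> range f \<subseteq> W \<and> is_form p \<nu> \<and> (\<forall>v. \<mu> v = \<nu> (f \<circ> v))"
      by (rule wit)
  next
    fix d assume "\<exists>(W::'v set) (f::'v \<Rightarrow> 'v) \<nu>. subspace W \<and> dim W = d \<and> linear f \<and> range f \<subseteq> W \<and> is_form p \<nu> \<and> (\<forall>v. \<mu> v = \<nu> (f \<circ> v))"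
    then show "DIM('v) - dim ?Z \<le> d" by (rule lower)
  qed
qed

lemma Z_sub_D:
  fixes \<mu> :: "(nat \<Rightarrow> 'v::euclidean_space) \<Rightarrow> real"
  assumes fm: "is_form p \<mu>" and nz: "\<mu> \<noteq> (\<lambda>v. 0)"
  shows "form_kernel p \<mu> \<subseteq> div_space UNIV p \<mu>"
proof
  fix x assume xZ: "x \<in> form_kernel p \<mu>"
  show "x \<in> div_space UNIV p \<mu>"
    unfolding D_char
  proof (intro CollectI ballI)
    fix \<eta> assume e: "\<eta> \<in> div_polar p \<mu>"
    have le: "linear \<eta>" and wz: "wedge 1 p (one_form \<eta>) \<mu> = (\<lambda>v. 0)" using e unfolding div_polar_def by auto
    show "\<eta> x = 0"
    proof (rule ccontr)
      assume nx: "\<eta> x \<noteq> 0"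
      define y where "y = (1 / \<eta> x) *\<^sub>R x"
      have y1: "\<eta> y = 1" using le nx unfolding y_def by (simp add: linear_scale)
      have van: "\<mu> d = 0" if d: "\<forall>i<p. \<eta> (d i) = 0" for d
        by (rule div_vanish[of \<eta> p \<mu> y UNIV]) (use le fm y1 d wz in auto)
      have "\<mu> v = 0" for v
      proof (cases "p = 0")
        case True then show ?thesis using van by simp
      next
        case False
        then have p: "0 < p" by simp
        have yZ: "y \<in> form_kernel p \<mu>"
          unfolding y_def using subspace_mul[OF Z_subspace[OF fm p] xZ] .
        let ?D = "{x. \<eta> x = 0}"
        have sp: "z \<in> span ((\<lambda>_. y) ` {..<1::nat} \<union> ?D)" for z
        proof -
          have "z = \<eta> z *\<^sub>R y + (z - \<eta> z *\<^sub>R y)" by simp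
          moreover have "y \<in> span ((\<lambda>_. y) ` {..<1::nat} \<union> ?D)"
          proof (intro span_base UnI1)
            show "y \<in> (\<lambda>_. y) ` {..<1::nat}" by (rule image_eqI[of _ _ 0]) auto
          qed
          moreover have "z - \<eta> z *\<^sub>R y \<in> span ((\<lambda>_. y) ` {..<1::nat} \<union> ?D)"
            using le y1 by (intro span_base) (auto simp: linear_diff linear_scale)
          ultimately show ?thesis by (metis span_add span_mul)
        qed
        show ?thesis
        proof (rule form_agree[OF fm zero_form, of 1 "\<lambda>_. y" ?D])
          fix v :: "nat \<Rightarrow> 'v" and k :: nat
          assume vB: "\<forall>i<p. v i \<in> (\<lambda>_. y) ` {..<1::nat} \<union> ?D" and k: "k < 1" and nm: "\<forall>i<p. v i \<noteq> y"
          have "\<forall>i<p. \<eta> (v i) = 0" using vB nm by auto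
          then show "\<mu> v = 0" by (rule van)
        next
          fix v :: "nat \<Rightarrow> 'v" assume v0: "\<forall>i<1::nat. v i = y"
          have "v = v(0 := y)" using v0 by auto
          then show "\<mu> v = 0" using yZ p unfolding form_kernel_def by (metis (mono_tags, lifting) mem_Collect_eq not_gr0)
        qed (use sp p in \<open>auto simp: lessThan_Suc\<close>)
      qed
      then show False using nz by auto
    qed
  qed
qed

theorem lemma4p1:
  fixes \<mu> :: "(nat \<Rightarrow> 'v::euclidean_space) \<Rightarrow> real" and p :: nat
  defines "n \<equiv> DIM('v)"
    and "r \<equiv> form_rank p \<mu>"
    and "Z \<equiv> form_kernel p \<mu>"
    and "D \<equiv> div_space UNIV p \<mu>"
    and "D' \<equiv> div_polar p \<mu>"
    and "s \<equiv> DIM('v) - dim (div_space UNIV p \<mu>)"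
  assumes form: "is_form p \<mu>" and nonzero: "\<mu> \<noteq> (\<lambda>v. 0)"
  shows "(dim Z = n - r \<and> s \<le> r) \<and>
    (int s \<noteq> int p - 1 \<and> s \<le> p \<and> (s = p \<longleftrightarrow> decomposable p \<mu>)) \<and>
    (\<forall>\<xi>. fun_basis_of n \<xi> {\<eta>. linear \<eta>} \<and> fun_basis_of s \<xi> D' \<longrightarrow>
           (\<exists>\<zeta>. is_form (p - s) \<zeta> \<and> \<mu> = wedge s (p - s) (wedge_list s \<xi>) \<zeta> \<and>
                indivisible_in UNIV (p - s) \<zeta> \<and>
                (\<exists>(m::nat) c g. (\<forall>j<m. \<forall>k<p - s. s \<le> g j k \<and> g j k < n) \<and>
                   \<zeta> = (\<lambda>v. \<Sum>j<m. c j * wedge_list (p - s) (\<lambda>k. \<xi> (g j k)) v)))) \<and>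
    (\<forall>\<xi> \<zeta> \<xi>' \<zeta>'.
           fun_basis_of s \<xi> D' \<and> is_form (p - s) \<zeta> \<and> \<mu> = wedge s (p - s) (wedge_list s \<xi>) \<zeta> \<and>
           fun_basis_of s \<xi>' D' \<and> is_form (p - s) \<zeta>' \<and> \<mu> = wedge s (p - s) (wedge_list s \<xi>') \<zeta>'
           \<longrightarrow> (\<exists>c. c \<noteq> 0 \<and> (\<forall>v. (\<forall>i<p - s. v i \<in> D) \<longrightarrow> \<zeta>' v = c * \<zeta> v))) \<and>
    (\<forall>\<xi> \<zeta>. fun_basis_of s \<xi> D' \<and> is_form (p - s) \<zeta> \<and> \<mu> = wedge s (p - s) (wedge_list s \<xi>) \<zeta>
           \<longrightarrow> indivisible_in D (p - s) \<zeta>)"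
proof -
  have sn: "s \<le> DIM('v)" unfolding s_def by simp
  have mk: "\<exists>e. sett p \<mu> s \<xi> e" if fb: "fun_basis_of s \<xi> D'" for \<xi>
  proof -
    obtain e where e: "\<forall>k<s. \<forall>j<s. \<xi> k (e j) = (if k = j then 1 else 0)"
      using dual_exists[OF fb_lin[OF fb[unfolded D'_def]] fb_indep[OF fb] sn] by blast
    have "sett p \<mu> s \<xi> e"
      by (unfold_locales) (use form nonzero fb e in \<open>auto simp: D'_def\<close>)
    then show ?thesis by blast
  qed
  obtain \<xi>0 where fb0: "fun_basis_of s \<xi>0 D'"
    using polar_basis[of p \<mu>] unfolding s_def D'_def by blast
  obtain e0 where S0: "sett p \<mu> s \<xi>0 e0" using mk[OF fb0] by blast
  interpret S0: sett p \<mu> s \<xi>0 e0 by (rule S0)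
  have A1: "dim Z = n - r \<and> s \<le> r"
  proof
    have rr: "r = n - dim Z" unfolding r_def n_def Z_def by (rule rank_part[OF form])
    have "dim Z \<le> n" unfolding n_def using dim_subset_UNIV[of Z] by simp
    then show "dim Z = n - r" using rr by simp
    have "dim Z \<le> dim D" unfolding Z_def D_def by (rule dim_subset[OF Z_sub_D[OF form nonzero]])
    then show "s \<le> r" using rr unfolding s_def n_def D_def by simp
  qed
  have A2: "int s \<noteq> int p - 1 \<and> s \<le> p \<and> (s = p \<longleftrightarrow> decomposable p \<mu>)"
  proof (intro conjI)
    show sp: "s \<le> p" by (rule S0.s_le_p)
    show "s = p \<longleftrightarrow> decomposable p \<mu>" using S0.p_imp_dec S0.dec_imp by blast
    show "int s \<noteq> int p - 1"
    proof
      assume h: "int s = int p - 1"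
      then have "p = Suc s" by simp
      then have "decomposable p \<mu>" by (rule S0.pm1_imp_dec)
      then have "s = p" by (rule S0.dec_imp)
      then show False using h by simp
    qed
  qed
  have B: "\<forall>\<xi>. fun_basis_of n \<xi> {\<eta>. linear \<eta>} \<and> fun_basis_of s \<xi> D' \<longrightarrow>
           (\<exists>\<zeta>. is_form (p - s) \<zeta> \<and> \<mu> = wedge s (p - s) (wedge_list s \<xi>) \<zeta> \<and>
                indivisible_in UNIV (p - s) \<zeta> \<and>
                (\<exists>(m::nat) c g. (\<forall>j<m. \<forall>k<p - s. s \<le> g j k \<and> g j k < n) \<and>
                   \<zeta> = (\<lambda>v. \<Sum>j<m. c j * wedge_list (p - s) (\<lambda>k. \<xi> (g j k)) v)))"
  proof (intro allI impI)
    fix \<xi> assume h: "fun_basis_of n \<xi> {\<eta>. linear \<eta>} \<and> fun_basis_of s \<xi> D'"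
    have linn: "k < n \<Longrightarrow> linear (\<xi> k)" for k using h unfolding fun_basis_of_def by auto
    have fbn: "fun_basis_of n \<xi> {\<eta>. linear \<eta>}" using h by simp
    have "\<exists>e. \<forall>k<n. \<forall>j<n. \<xi> k (e j) = (if k = j then 1 else 0)"
      using dual_exists[of n \<xi>] linn fb_indep[OF fbn] unfolding n_def by blast
    then obtain e where e: "\<forall>k<n. \<forall>j<n. \<xi> k (e j) = (if k = j then 1 else 0)" by blast
    have sn': "s \<le> n" using sn unfolding n_def .
    have "sett p \<mu> s \<xi> e"
      by (unfold_locales) (use form nonzero h e sn' in \<open>auto simp: D'_def\<close>)
    then interpret S: sett p \<mu> s \<xi> e .
    show "\<exists>\<zeta>. is_form (p - s) \<zeta> \<and> \<mu> = wedge s (p - s) (wedge_list s \<xi>) \<zeta> \<and>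
                indivisible_in UNIV (p - s) \<zeta> \<and>
                (\<exists>(m::nat) c g. (\<forall>j<m. \<forall>k<p - s. s \<le> g j k \<and> g j k < n) \<and>
                   \<zeta> = (\<lambda>v. \<Sum>j<m. c j * wedge_list (p - s) (\<lambda>k. \<xi> (g j k)) v))"
      by (rule S.part_b) (use h e sn' in auto)
  qed
  have C: "\<forall>\<xi> \<zeta> \<xi>' \<zeta>'.
           fun_basis_of s \<xi> D' \<and> is_form (p - s) \<zeta> \<and> \<mu> = wedge s (p - s) (wedge_list s \<xi>) \<zeta> \<and>
           fun_basis_of s \<xi>' D' \<and> is_form (p - s) \<zeta>' \<and> \<mu> = wedge s (p - s) (wedge_list s \<xi>') \<zeta>'
           \<longrightarrow> (\<exists>c. c \<noteq> 0 \<and> (\<forall>v. (\<forall>i<p - s. v i \<in> D) \<longrightarrow> \<zeta>' v = c * \<zeta> v))"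
  proof (intro allI impI)
    fix \<xi> \<zeta> \<xi>' \<zeta>'
    assume h: "fun_basis_of s \<xi> D' \<and> is_form (p - s) \<zeta> \<and> \<mu> = wedge s (p - s) (wedge_list s \<xi>) \<zeta> \<and>
           fun_basis_of s \<xi>' D' \<and> is_form (p - s) \<zeta>' \<and> \<mu> = wedge s (p - s) (wedge_list s \<xi>') \<zeta>'"
    obtain e where S1: "sett p \<mu> s \<xi> e" using mk h by blast
    obtain e' where S2: "sett p \<mu> s \<xi>' e'" using mk h by blast
    interpret S1: sett p \<mu> s \<xi> e by (rule S1)
    show "\<exists>c. c \<noteq> 0 \<and> (\<forall>v. (\<forall>i<p - s. v i \<in> D) \<longrightarrow> \<zeta>' v = c * \<zeta> v)"
      unfolding D_def by (rule S1.part_c[OF S2]) (use h in auto)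
  qed
  have Dd: "\<forall>\<xi> \<zeta>. fun_basis_of s \<xi> D' \<and> is_form (p - s) \<zeta> \<and> \<mu> = wedge s (p - s) (wedge_list s \<xi>) \<zeta>
           \<longrightarrow> indivisible_in D (p - s) \<zeta>"
  proof (intro allI impI)
    fix \<xi> \<zeta>
    assume h: "fun_basis_of s \<xi> D' \<and> is_form (p - s) \<zeta> \<and> \<mu> = wedge s (p - s) (wedge_list s \<xi>) \<zeta>"
    obtain e where S1: "sett p \<mu> s \<xi> e" using mk h by blast
    interpret S1: sett p \<mu> s \<xi> e by (rule S1)
    show "indivisible_in D (p - s) \<zeta>"
      unfolding D_def by (rule S1.part_d) (use h in auto)
  qed
  show ?thesis using A1 A2 B C Dd by blast
qed


end
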